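(* Let $n\ge3$. For $k=0$ and every $0$-jet $j^0\Gamma\in\mathcal{F}_0$, the stabilizer subalgebra of $j^0\Gamma$ in $\mathfrak{k}_0$ projects isomorphically onto the space of linear vector fields $V_1$ (i.e. $V_1$ is arbitrary and $V_2$ is uniquely determined by $V_1$), so it has dimension $n^2$. For every $k\ge1$, there is an open dense subset of $\mathcal{F}_k$ such that for every $j^k\Gamma$ in it the stabilizer subalgebra of $j^k\Gamma$ in $\mathfrak{k}_k$ is $\{0\}$.
   Context: A symmetric connection near $0\in\mathbb{R}^n$ is given by smooth Christoffel symbols $\Gamma^l_{ij}=\Gamma^l_{ji}$. $\mathcal{F}_k$ denotes the (finite-dimensional) vector space of $k$-jets at $0$ of such connections, i.e. of degree-$\le k$ Taylor polynomials of the $\Gamma^l_{ij}$ at $0$. The group $G=\mathrm{Diff}(\mathbb{R}^n,0)$ of germs of origin-preserving diffeomorphisms acts on connections by $(\varphi^*\nabla)_XY=(\varphi_* )^{-1}(\nabla_{\varphi_*X}\varphi_*Y)$, hence on $\mathcal{F}_k$; this action factors through the finite-dimensional Lie group $K_k=G/G_{k+3}$, where $G_m=\{\varphi\in G:\varphi(x)=x+O(|x|^m)\}$. The Lie algebra $\mathfrak{k}_k$ of $K_k$ is identified with polynomial vector fields $V=V_1+V_2+\dots+V_{k+2}$ with $V_m$ having homogeneous components of degree $m$ (so $V(0)=0$); it acts on $\mathcal{F}_k$ by $j^k\Gamma\mapsto j^k(\mathcal{L}_V\Gamma)$, where $(\mathcal{L}_V\Gamma)^l_{ij}=V^k\partial_k\Gamma^l_{ij}-\Gamma^k_{ij}\partial_kV^l+\Gamma^l_{kj}\partial_iV^k+\Gamma^l_{ik}\partial_jV^k+\partial_i\partial_jV^l$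 (this is well defined on $k$-jets since $V(0)=0$). The stabilizer subalgebra of $j^k\Gamma$ is $\{V\in\mathfrak{k}_k: j^k(\mathcal{L}_V\Gamma)=0\}$. *)

theory Defs
  imports "HOL-Analysis.Analysis" "HOL-Library.Function_Algebras"
begin

text \<open>Polynomials in the variables x_0,...,x_{n-1} are represented by their coefficient
functions on multi-indices (functions nat => nat, vanishing at indices >= n).\<close>

type_synonym mindex = "nat \<Rightarrow> nat"
type_synonym rpoly = "mindex \<Rightarrow> real"

definition MI :: "nat \<Rightarrow> mindex set" where
  "MI n = {\<alpha>. \<forall>i\<ge>n. \<alpha> i = 0}"

definition mdeg :: "nat \<Rightarrow> mindex \<Rightarrow> nat" where
  "mdeg n \<alpha> = (\<Sum>i<n. \<alpha> i)"

definition mis :: "nat \<Rightarrow> nat \<Rightarrow> mindex set" where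
  "mis n d = {\<alpha>. \<alpha> \<in> MI n \<and> mdeg n \<alpha> \<le> d}"

definition polys :: "nat \<Rightarrow> nat \<Rightarrow> rpoly set" where
  "polys n d = {p. \<forall>\<alpha>. p \<alpha> \<noteq> 0 \<longrightarrow> \<alpha> \<in> mis n d}"

definition pdiff :: "nat \<Rightarrow> rpoly \<Rightarrow> rpoly" where
  "pdiff i p = (\<lambda>\<alpha>. real (\<alpha> i + 1) * p (\<alpha>(i := \<alpha> i + 1)))"

definition pmult :: "rpoly \<Rightarrow> rpoly \<Rightarrow> rpoly" where
  "pmult p q = (\<lambda>\<alpha>. \<Sum>\<beta>\<in>{\<beta>. \<forall>i. \<beta> i \<le> \<alpha> i}. p \<beta> * q (\<lambda>i. \<alpha> i - \<beta> i))"

definition trunc :: "nat \<Rightarrow> nat \<Rightarrow> rpoly \<Rightarrow> rpoly" where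
  "trunc n k p = (\<lambda>\<alpha>. if mdeg n \<alpha> \<le> k then p \<alpha> else 0)"

definition hcomp :: "nat \<Rightarrow> nat \<Rightarrow> rpoly \<Rightarrow> rpoly" where
  "hcomp n m p = (\<lambda>\<alpha>. if mdeg n \<alpha> = m then p \<alpha> else 0)"

text \<open>The space F_k of k-jets of symmetric connections: Christoffel symbols Gamma l i j
(upper index l, lower indices i j), polynomials of degree \<le> k, symmetric in i j,
and zero for indices outside {0..<n}.\<close>
definition Fjets :: "nat \<Rightarrow> nat \<Rightarrow> (nat \<Rightarrow> nat \<Rightarrow> nat \<Rightarrow> rpoly) set" where
  "Fjets n k = {\<Gamma>. (\<forall>l i j. \<Gamma> l i j \<in> polys n k)
      \<and> (\<forall>l i j. \<Gamma> l i j = \<Gamma> l j i)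
      \<and> (\<forall>l i j. (n \<le> l \<or> n \<le> i \<or> n \<le> j) \<longrightarrow> \<Gamma> l i j = (\<lambda>_. 0))}"

definition kalg :: "nat \<Rightarrow> nat \<Rightarrow> (nat \<Rightarrow> rpoly) set" where
  "kalg n k = {V. (\<forall>l. V l \<in> polys n (k + 2)) \<and> (\<forall>l. V l (\<lambda>_. 0) = 0)
      \<and> (\<forall>l\<ge>n. V l = (\<lambda>_. 0))}"

definition linvf :: "nat \<Rightarrow> (nat \<Rightarrow> rpoly) set" where
  "linvf n = {W. (\<forall>l. \<forall>\<alpha>. W l \<alpha> \<noteq> 0 \<longrightarrow> \<alpha> \<in> MI n \<and> mdeg n \<alpha> = 1)
      \<and> (\<forall>l\<ge>n. W l = (\<lambda>_. 0))}"

definition lie :: "nat \<Rightarrow> (nat \<Rightarrow> rpoly) \<Rightarrow> (nat \<Rightarrow> nat \<Rightarrow> nat \<Rightarrow> rpoly)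
    \<Rightarrow> nat \<Rightarrow> nat \<Rightarrow> nat \<Rightarrow> rpoly" where
  "lie n V \<Gamma> l i j = (\<lambda>\<alpha>.
       (\<Sum>m<n. pmult (V m) (pdiff m (\<Gamma> l i j)) \<alpha>)
     - (\<Sum>m<n. pmult (\<Gamma> m i j) (pdiff m (V l)) \<alpha>)
     + (\<Sum>m<n. pmult (\<Gamma> l m j) (pdiff i (V m)) \<alpha>)
     + (\<Sum>m<n. pmult (\<Gamma> l i m) (pdiff j (V m)) \<alpha>)
     + pdiff i (pdiff j (V l)) \<alpha>)"

definition stab :: "nat \<Rightarrow> nat \<Rightarrow> (nat \<Rightarrow> nat \<Rightarrow> nat \<Rightarrow> rpoly) \<Rightarrow> (nat \<Rightarrow> rpoly) set" where
  "stab n k \<Gamma> = {V \<in> kalg n k. \<forall>l<n. \<forall>i<n. \<forall>j<n. trunc n k (lie n V \<Gamma> l i j) = (\<lambda>_. 0)}"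

definition vscale :: "real \<Rightarrow> (nat \<Rightarrow> rpoly) \<Rightarrow> (nat \<Rightarrow> rpoly)" where
  "vscale c V = (\<lambda>l \<alpha>. c * V l \<alpha>)"

definition jdist :: "nat \<Rightarrow> nat \<Rightarrow> (nat \<Rightarrow> nat \<Rightarrow> nat \<Rightarrow> rpoly) \<Rightarrow> (nat \<Rightarrow> nat \<Rightarrow> nat \<Rightarrow> rpoly) \<Rightarrow> real" where
  "jdist n k \<Gamma> \<Gamma>' = (\<Sum>l<n. \<Sum>i<n. \<Sum>j<n. \<Sum>\<alpha>\<in>mis n k. \<bar>\<Gamma> l i j \<alpha> - \<Gamma>' l i j \<alpha>\<bar>)"

definition open_in_F :: "nat \<Rightarrow> nat \<Rightarrow> (nat \<Rightarrow> nat \<Rightarrow> nat \<Rightarrow> rpoly) set \<Rightarrow> bool" where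
  "open_in_F n k U \<longleftrightarrow> U \<subseteq> Fjets n k \<and>
     (\<forall>\<Gamma>\<in>U. \<exists>e>0. \<forall>\<Gamma>'\<in>Fjets n k. jdist n k \<Gamma> \<Gamma>' < e \<longrightarrow> \<Gamma>' \<in> U)"

definition dense_in_F :: "nat \<Rightarrow> nat \<Rightarrow> (nat \<Rightarrow> nat \<Rightarrow> nat \<Rightarrow> rpoly) set \<Rightarrow> bool" where
  "dense_in_F n k U \<longleftrightarrow>
     (\<forall>\<Gamma>\<in>Fjets n k. \<forall>e>0. \<exists>\<Gamma>'\<in>U. jdist n k \<Gamma> \<Gamma>' < e)"

end

theory Submission
  imports Defs "Jordan_Normal_Form.Determinant" "HOL-Computational_Algebra.Polynomial"
begin

definition zi :: mindex where "zi = (\<lambda>_. 0)"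
definition ei :: "nat \<Rightarrow> mindex" where "ei m = (\<lambda>t. if t = m then 1 else 0)"

lemma zi_apply[simp]: "zi t = 0" by (simp add: zi_def)
lemma ei_apply: "ei m t = (if t = m then 1 else 0)" by (simp add: ei_def)
lemma ei_same[simp]: "ei m m = 1" by (simp add: ei_def)
lemma ei_other[simp]: "t \<noteq> m \<Longrightarrow> ei m t = 0" by (simp add: ei_def)
lemma ei_ne_zi[simp]: "ei m \<noteq> zi" "zi \<noteq> ei m"
  by (metis ei_same zi_apply zero_neq_one)+
lemma ei_inj[simp]: "(ei a = ei b) = (a = b)"
  by (metis ei_other ei_same zero_neq_one)
lemma zi_upd: "zi(i := 1) = ei i" "zi(i := Suc 0) = ei i" by (auto simp: ei_def)
lemma lam0_zi: "(\<lambda>_. 0::nat) = zi" by (simp add: zi_def)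

lemma mdeg_le_each: "i < n \<Longrightarrow> \<alpha> i \<le> mdeg n \<alpha>"
  unfolding mdeg_def by (rule member_le_sum) auto

lemma finite_bounded_funs: "finite {\<beta>::mindex. (\<forall>i. \<beta> i \<le> K) \<and> (\<forall>i\<ge>n. \<beta> i = 0)}"
proof -
  have "finite {f::mindex. \<forall>x. (x \<in> {..<n} \<longrightarrow> f x \<in> {..K}) \<and> (x \<notin> {..<n} \<longrightarrow> f x = 0)}"
    by (rule finite_set_of_finite_funs) auto
  then show ?thesis by (rule finite_subset[rotated]) auto
qed

lemma MI_le_finite: assumes "\<alpha> \<in> MI n" shows "finite {\<beta>. \<forall>i. \<beta> i \<le> \<alpha> i}"
proof (rule finite_subset[OF _ finite_bounded_funs[of "mdeg n \<alpha>" n]], safe)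
  fix \<beta> :: mindex and i assume b: "\<forall>i. \<beta> i \<le> \<alpha> i"
  have a0: "\<And>i. n \<le> i \<Longrightarrow> \<alpha> i = 0" using assms by (simp add: MI_def)
  show "\<beta> i \<le> mdeg n \<alpha>"
  proof (cases "i < n")
    case True then show ?thesis using b mdeg_le_each[of i n \<alpha>] True le_trans by blast
  next
    case False then show ?thesis using b[rule_format, of i] a0[of i] by simp
  qed
next
  fix \<beta> :: mindex and i assume b: "\<forall>i. \<beta> i \<le> \<alpha> i" "n \<le> i"
  then show "\<beta> i = 0" using assms b(1)[rule_format, of i] by (simp add: MI_def)
qed

lemma mis_finite: "finite (mis n d)"
proof (rule finite_subset[OF _ finite_bounded_funs[of d n]], safe)
  fix \<beta> :: mindex and i assume b: "\<beta> \<in> mis n d"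
  then show "\<beta> i \<le> d"
  proof (cases "i < n")
    case True then show ?thesis using b mdeg_le_each[of i n \<beta>] True le_trans by (auto simp: mis_def)
  next
    case False then show ?thesis using b by (auto simp: mis_def MI_def)
  qed
next
  fix \<beta> :: mindex and i assume b: "\<beta> \<in> mis n d" "n \<le> i"
  then show "\<beta> i = 0" by (auto simp: mis_def MI_def)
qed

lemma zi_MI[simp]: "zi \<in> MI n" by (simp add: MI_def)
lemma ei_MI[simp]: "m < n \<Longrightarrow> ei m \<in> MI n" by (simp add: MI_def ei_def)
lemma mdeg_zi[simp]: "mdeg n zi = 0" by (simp add: mdeg_def)
lemma mdeg_ei[simp]: "m < n \<Longrightarrow> mdeg n (ei m) = 1"
  by (simp add: mdeg_def ei_def)

lemma mdeg0: "\<alpha> \<in> MI n \<Longrightarrow> mdeg n \<alpha> = 0 \<Longrightarrow> \<alpha> = zi"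
proof (rule ext)
  fix i assume a: "\<alpha> \<in> MI n" "mdeg n \<alpha> = 0"
  show "\<alpha> i = zi i"
  proof (cases "i < n")
    case True then show ?thesis using mdeg_le_each[of i n \<alpha>] True a by simp
  next
    case False then show ?thesis using a by (simp add: MI_def)
  qed
qed


lemma le_zi: "{\<beta>::mindex. \<forall>i. \<beta> i \<le> zi i} = {zi}"
  by (auto simp: fun_eq_iff)

lemma le_ei_aux: assumes b: "\<forall>i. \<beta> i \<le> ei m i" shows "\<beta> = zi \<or> \<beta> = ei m"
proof (cases "\<beta> m = 0")
  case True
  have "\<beta> t = 0" for t using b[rule_format, of t] True by (cases "t = m") auto
  then show ?thesis by (auto simp: fun_eq_iff)
next
  case False
  have "\<beta> t = ei m t" for t using b[rule_format, of t] False by (cases "t = m") auto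
  then show ?thesis by (auto simp: fun_eq_iff)
qed

lemma le_ei: "{\<beta>::mindex. \<forall>i. \<beta> i \<le> ei m i} = {zi, ei m}"
  unfolding set_eq_iff
proof (intro allI iffI)
  fix x :: mindex assume "x \<in> {\<beta>. \<forall>i. \<beta> i \<le> ei m i}"
  then show "x \<in> {zi, ei m}" using le_ei_aux[of x m] by blast
next
  fix x :: mindex assume "x \<in> {zi, ei m}"
  then show "x \<in> {\<beta>. \<forall>i. \<beta> i \<le> ei m i}" by auto
qed

lemma pmult_zi: "pmult p q zi = p zi * q zi"
proof -
  have "(\<lambda>i. zi i - zi i) = zi" by auto
  then show ?thesis unfolding pmult_def le_zi by simp
qed

lemma pmult_ei: "pmult p q (ei m) = p zi * q (ei m) + p (ei m) * q zi"
proof -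
  have a: "(\<lambda>i. ei m i - zi i) = ei m" by auto
  have b: "(\<lambda>i. ei m i - ei m i) = zi" by auto
  show ?thesis unfolding pmult_def le_ei by (simp add: a b lam0_zi)
qed

lemma pdiff_zi: "pdiff i p zi = p (ei i)"
  by (simp add: pdiff_def zi_upd)

lemma pdiff2: "pdiff i (pdiff j p) \<alpha> = real (\<alpha> i + 1) * real ((\<alpha>(i := \<alpha> i + 1)) j + 1)
   * p ((\<alpha>(i := \<alpha> i + 1))(j := (\<alpha>(i := \<alpha> i + 1)) j + 1))"
  by (simp add: pdiff_def)

lemma pdiff_comm: "pdiff a (pdiff b p) = pdiff b (pdiff a p)"
proof (rule ext)
  fix \<alpha> :: mindex
  show "pdiff a (pdiff b p) \<alpha> = pdiff b (pdiff a p) \<alpha>"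
  proof (cases "a = b")
    case False
    show ?thesis using False unfolding pdiff2 by (simp add: fun_upd_twist)
  qed simp
qed


lemma mdeg_upd: assumes "i < n" shows "mdeg n (\<gamma>(i := x)) + \<gamma> i = mdeg n \<gamma> + x"
proof -
  have f: "finite {..<n}" by simp
  have i: "i \<in> {..<n}" using assms by simp
  have "mdeg n (\<gamma>(i := x)) = x + (\<Sum>t\<in>{..<n}-{i}. (\<gamma>(i := x)) t)"
    unfolding mdeg_def using sum.remove[OF f i, of "\<gamma>(i := x)"] by simp
  also have "(\<Sum>t\<in>{..<n}-{i}. (\<gamma>(i := x)) t) = (\<Sum>t\<in>{..<n}-{i}. \<gamma> t)"
    by (rule sum.cong) auto
  finally have a: "mdeg n (\<gamma>(i := x)) = x + (\<Sum>t\<in>{..<n}-{i}. \<gamma> t)" .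
  have b: "mdeg n \<gamma> = \<gamma> i + (\<Sum>t\<in>{..<n}-{i}. \<gamma> t)"
    unfolding mdeg_def using sum.remove[OF f i, of \<gamma>] by simp
  show ?thesis using a b by simp
qed

lemma mdeg_suc: "i < n \<Longrightarrow> mdeg n (\<gamma>(i := \<gamma> i + 1)) = mdeg n \<gamma> + 1"
  using mdeg_upd[of i n \<gamma> "\<gamma> i + 1"] by simp

lemma MI_upd: "i < n \<Longrightarrow> (\<gamma>(i := x) \<in> MI n) = (\<gamma> \<in> MI n)"
  by (auto simp: MI_def)

lemma decomp1: assumes "\<beta> \<in> MI n" "mdeg n \<beta> = Suc d"
  shows "\<exists>\<gamma> i. \<gamma> \<in> MI n \<and> mdeg n \<gamma> = d \<and> i < n \<and> \<beta> = \<gamma>(i := \<gamma> i + 1)"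
proof -
  have "\<exists>i<n. \<beta> i \<noteq> 0"
  proof (rule ccontr)
    assume "\<not> (\<exists>i<n. \<beta> i \<noteq> 0)"
    then have "mdeg n \<beta> = 0" unfolding mdeg_def by simp
    then show False using assms by simp
  qed
  then obtain i where i: "i < n" "\<beta> i \<noteq> 0" by blast
  define \<gamma> where "\<gamma> = \<beta>(i := \<beta> i - 1)"
  have e: "\<beta> = \<gamma>(i := \<gamma> i + 1)" using i by (auto simp: \<gamma>_def fun_eq_iff)
  have "\<gamma> \<in> MI n" using assms(1) i MI_upd[of i n \<beta>] by (simp add: \<gamma>_def)
  moreover have "mdeg n \<gamma> = d" using mdeg_suc[OF i(1), of \<gamma>] e assms(2) by simp
  ultimately show ?thesis using e i by blast
qed

lemma decomp2: assumes "\<beta> \<in> MI n" "mdeg n \<beta> = d + 2"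
  shows "\<exists>\<alpha> i j. \<alpha> \<in> MI n \<and> mdeg n \<alpha> = d \<and> i < n \<and> j < n \<and>
     \<beta> = (\<alpha>(i := \<alpha> i + 1))(j := (\<alpha>(i := \<alpha> i + 1)) j + 1)"
proof -
  obtain \<gamma> j where g: "\<gamma> \<in> MI n" "mdeg n \<gamma> = Suc d" "j < n" "\<beta> = \<gamma>(j := \<gamma> j + 1)"
    using decomp1[OF assms(1), of "Suc d"] assms(2) by auto
  obtain \<alpha> i where a: "\<alpha> \<in> MI n" "mdeg n \<alpha> = d" "i < n" "\<gamma> = \<alpha>(i := \<alpha> i + 1)"
    using decomp1[OF g(1) g(2)] by auto
  show ?thesis using g a by blast
qed

lemma le_MI: "\<alpha> \<in> MI n \<Longrightarrow> \<forall>t. \<beta> t \<le> \<alpha> t \<Longrightarrow> \<beta> \<in> MI n"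
  by (auto simp: MI_def) (metis le_zero_eq)

lemma le_mdeg: "\<forall>t. \<beta> t \<le> \<alpha> t \<Longrightarrow> mdeg n \<beta> \<le> mdeg n \<alpha>"
  unfolding mdeg_def by (rule sum_mono) auto

lemma diff_MI: "\<alpha> \<in> MI n \<Longrightarrow> (\<lambda>t. \<alpha> t - \<beta> t) \<in> MI n"
  by (auto simp: MI_def)

lemma diff_mdeg: "mdeg n (\<lambda>t. \<alpha> t - \<beta> t) \<le> mdeg n \<alpha>"
  unfolding mdeg_def by (rule sum_mono) auto

lemma lie_zi: assumes "\<forall>m. V m zi = 0"
  shows "lie n V \<Gamma> l i j zi = - (\<Sum>m<n. \<Gamma> m i j zi * V l (ei m)) + (\<Sum>m<n. \<Gamma> l m j zi * V m (ei i))
     + (\<Sum>m<n. \<Gamma> l i m zi * V m (ei j)) + pdiff i (pdiff j (V l)) zi"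
  unfolding lie_def by (simp add: pmult_zi pdiff_zi assms sum_negf)

lemma lie_ei: assumes "\<forall>m. V m zi = 0"
  shows "lie n V \<Gamma> l i j (ei q) = (\<Sum>m<n. V m (ei q) * \<Gamma> l i j (ei m))
    - (\<Sum>m<n. \<Gamma> m i j zi * pdiff q (pdiff m (V l)) zi + \<Gamma> m i j (ei q) * V l (ei m))
    + (\<Sum>m<n. \<Gamma> l m j zi * pdiff q (pdiff i (V m)) zi + \<Gamma> l m j (ei q) * V m (ei i))
    + (\<Sum>m<n. \<Gamma> l i m zi * pdiff q (pdiff j (V m)) zi + \<Gamma> l i m (ei q) * V m (ei j))
    + pdiff q (pdiff i (pdiff j (V l))) zi"
  unfolding lie_def by (simp add: pmult_ei pdiff_zi assms)

definition suppMI :: "nat \<Rightarrow> rpoly \<Rightarrow> bool" where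
  "suppMI n p \<longleftrightarrow> (\<forall>\<beta>. p \<beta> \<noteq> 0 \<longrightarrow> \<beta> \<in> MI n)"

lemma polys_suppMI: "p \<in> polys n d \<Longrightarrow> suppMI n p"
  by (auto simp: polys_def suppMI_def mis_def)

lemma pdiff_suppMI: "m < n \<Longrightarrow> suppMI n p \<Longrightarrow> suppMI n (pdiff m p)"
  unfolding suppMI_def pdiff_def by (metis MI_upd mult_zero_right)

lemma pmult_offMI: assumes "suppMI n p" "suppMI n q" "\<alpha> \<notin> MI n"
  shows "pmult p q \<alpha> = 0"
proof -
  obtain t where t: "t \<ge> n" "\<alpha> t \<noteq> 0" using assms(3) by (auto simp: MI_def)
  have "p \<beta> * q (\<lambda>i. \<alpha> i - \<beta> i) = 0" for \<beta>
  proof (cases "\<beta> \<in> MI n")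
    case True
    then have "\<beta> t = 0" using t by (simp add: MI_def)
    then have "(\<lambda>i. \<alpha> i - \<beta> i) \<notin> MI n" using t by (auto simp: MI_def)
    then show ?thesis using assms(2) by (auto simp: suppMI_def)
  next
    case False then show ?thesis using assms(1) by (auto simp: suppMI_def)
  qed
  then show ?thesis unfolding pmult_def by (intro sum.neutral ballI) blast
qed

lemma lie_offMI: assumes "\<forall>m. suppMI n (V m)" "\<forall>l i j. suppMI n (\<Gamma> l i j)" "i < n" "j < n" "\<alpha> \<notin> MI n"
  shows "lie n V \<Gamma> l i j \<alpha> = 0"
proof -
  have s1: "suppMI n (pdiff m (V l))" if "m < n" for m l using pdiff_suppMI assms(1) that by blast
  have s2: "suppMI n (pdiff m (\<Gamma> l i j))" if "m < n" for m l i j using pdiff_suppMI assms(2) that by blast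
  have s3: "suppMI n (pdiff i (pdiff j (V l)))" using pdiff_suppMI assms(1,3,4) by blast
  have "pdiff i (pdiff j (V l)) \<alpha> = 0" using s3 assms(5) by (auto simp: suppMI_def)
  then show ?thesis unfolding lie_def
    using pmult_offMI[OF _ _ assms(5)] assms s1 s2 by simp
qed

lemma lie_high: assumes "\<alpha> \<in> MI n" "i < n" "j < n"
  and van: "\<forall>m \<beta>. mdeg n \<beta> \<le> mdeg n \<alpha> + 1 \<longrightarrow> V m \<beta> = 0"
  shows "lie n V \<Gamma> l i j \<alpha> = pdiff i (pdiff j (V l)) \<alpha>"
proof -
  have A: "pmult (V m) X \<alpha> = 0" for m X
  proof -
    have "V m \<beta> * X (\<lambda>t. \<alpha> t - \<beta> t) = 0" if "\<beta> \<in> {\<beta>. \<forall>i. \<beta> i \<le> \<alpha> i}" for \<beta>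
      using that van le_mdeg[of \<beta> \<alpha> n] by auto
    then show ?thesis unfolding pmult_def by (simp add: sum.neutral)
  qed
  have B: "pmult X (pdiff m (V l')) \<alpha> = 0" if "m < n" for m X l'
  proof -
    have "pdiff m (V l') \<gamma> = 0" if "mdeg n \<gamma> \<le> mdeg n \<alpha>" for \<gamma>
      using van mdeg_suc[OF \<open>m < n\<close>, of \<gamma>] that unfolding pdiff_def by auto
    then have "X \<beta> * pdiff m (V l') (\<lambda>t. \<alpha> t - \<beta> t) = 0" for \<beta>
      using diff_mdeg[of n \<alpha> \<beta>] by auto
    then show ?thesis unfolding pmult_def by (intro sum.neutral ballI) blast
  qed
  show ?thesis unfolding lie_def using A B assms(2,3) by simp
qed


lemma kalg_facts: assumes "V \<in> kalg n k"
  shows "\<And>m. suppMI n (V m)" "\<And>m \<beta>. V m \<beta> \<noteq> 0 \<Longrightarrow> \<beta> \<in> MI n \<and> mdeg n \<beta> \<le> k + 2"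
    "\<And>m. V m zi = 0" "\<And>m. n \<le> m \<Longrightarrow> V m = (\<lambda>_. 0)"
  using assms by (auto simp: kalg_def polys_def mis_def suppMI_def zi_def)

lemma vanish:
  assumes V: "V \<in> kalg n k"
    and L: "\<forall>l<n. \<forall>i<n. \<forall>j<n. \<forall>\<alpha>. mdeg n \<alpha> \<le> k \<longrightarrow> lie n V \<Gamma> l i j \<alpha> = 0"
    and low: "\<forall>m \<beta>. \<beta> \<in> MI n \<longrightarrow> mdeg n \<beta> \<le> 1 \<longrightarrow> V m \<beta> = 0"
  shows "V = (\<lambda>_ _. 0)"
proof -
  note kf = kalg_facts[OF V]
  have claim: "d \<le> k + 1 \<Longrightarrow> \<forall>m \<beta>. mdeg n \<beta> \<le> d + 1 \<longrightarrow> V m \<beta> = 0" for d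
  proof (induction d)
    case 0
    show ?case using low kf(2) by (metis Suc_eq_plus1 add_0)
  next
    case (Suc d)
    then have IH: "\<forall>m \<beta>. mdeg n \<beta> \<le> d + 1 \<longrightarrow> V m \<beta> = 0" and dk: "d \<le> k" by auto
    show ?case
    proof (intro allI impI)
      fix m \<beta> assume b: "mdeg n \<beta> \<le> Suc d + 1"
      show "V m \<beta> = 0"
      proof (rule ccontr)
        assume nz: "V m \<beta> \<noteq> 0"
        then have bMI: "\<beta> \<in> MI n" using kf(2) by blast
        have "m < n" using nz kf(4) by (metis not_le)
        have "mdeg n \<beta> = d + 2" using IH b nz by (metis Suc_eq_plus1 add_2_eq_Suc' le_SucE)
        then obtain \<alpha> i j where a: "\<alpha> \<in> MI n" "mdeg n \<alpha> = d" "i < n" "j < n"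
          "\<beta> = (\<alpha>(i := \<alpha> i + 1))(j := (\<alpha>(i := \<alpha> i + 1)) j + 1)"
          using decomp2[OF bMI] by blast
        have "lie n V \<Gamma> m i j \<alpha> = 0" using L \<open>m < n\<close> a dk by auto
        moreover have "lie n V \<Gamma> m i j \<alpha> = pdiff i (pdiff j (V m)) \<alpha>"
          by (rule lie_high) (use a IH in auto)
        ultimately have "pdiff i (pdiff j (V m)) \<alpha> = 0" by simp
        then have "V m \<beta> = 0" unfolding pdiff2 a(5) by simp
        then show False using nz by simp
      qed
    qed
  qed
  show ?thesis
  proof (intro ext)
    fix m \<beta>
    show "V m \<beta> = 0"
    proof (cases "mdeg n \<beta> \<le> k + 2")
      case True then show ?thesis using claim[of "k+1"] by simp
    next
      case False then show ?thesis using kf(2) by auto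
    qed
  qed
qed

definition gc :: "(nat \<Rightarrow> nat \<Rightarrow> nat \<Rightarrow> rpoly) \<Rightarrow> nat \<Rightarrow> nat \<Rightarrow> nat \<Rightarrow> real" where
  "gc \<Gamma> l i j = \<Gamma> l i j zi"
definition hc :: "(nat \<Rightarrow> nat \<Rightarrow> nat \<Rightarrow> rpoly) \<Rightarrow> nat \<Rightarrow> nat \<Rightarrow> nat \<Rightarrow> nat \<Rightarrow> real" where
  "hc \<Gamma> l i j q = \<Gamma> l i j (ei q)"

definition D2f :: "nat \<Rightarrow> (nat \<Rightarrow> nat \<Rightarrow> nat \<Rightarrow> rpoly) \<Rightarrow> (nat \<Rightarrow> nat \<Rightarrow> real) \<Rightarrow> nat \<Rightarrow> nat \<Rightarrow> nat \<Rightarrow> real" where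
  "D2f n \<Gamma> a l i j = (\<Sum>m<n. gc \<Gamma> m i j * a l m) - (\<Sum>m<n. gc \<Gamma> l m j * a m i) - (\<Sum>m<n. gc \<Gamma> l i m * a m j)"

definition Rf :: "nat \<Rightarrow> (nat \<Rightarrow> nat \<Rightarrow> nat \<Rightarrow> rpoly) \<Rightarrow> (nat \<Rightarrow> nat \<Rightarrow> real) \<Rightarrow> nat \<Rightarrow> nat \<Rightarrow> nat \<Rightarrow> nat \<Rightarrow> real" where
  "Rf n \<Gamma> a l i j q = (\<Sum>m<n. a m q * hc \<Gamma> l i j m)
    - (\<Sum>m<n. gc \<Gamma> m i j * D2f n \<Gamma> a l q m + hc \<Gamma> m i j q * a l m)
    + (\<Sum>m<n. gc \<Gamma> l m j * D2f n \<Gamma> a m q i + hc \<Gamma> l m j q * a m i)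
    + (\<Sum>m<n. gc \<Gamma> l i m * D2f n \<Gamma> a m q j + hc \<Gamma> l i m q * a m j)"

definition Phi :: "nat \<Rightarrow> (nat \<Rightarrow> nat \<Rightarrow> nat \<Rightarrow> rpoly) \<Rightarrow> (nat \<Rightarrow> nat \<Rightarrow> real) \<Rightarrow> nat \<times> nat \<times> nat \<times> nat \<Rightarrow> real" where
  "Phi n \<Gamma> a r = (case r of (l, i, j, q) \<Rightarrow> Rf n \<Gamma> a l i j q - Rf n \<Gamma> a l q j i)"

lemma stab_lie0: assumes "V \<in> stab n k \<Gamma>" "l < n" "i < n" "j < n" "mdeg n \<alpha> \<le> k"
  shows "lie n V \<Gamma> l i j \<alpha> = 0"
proof -
  have "trunc n k (lie n V \<Gamma> l i j) = (\<lambda>_. 0)" using assms by (auto simp: stab_def)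
  from fun_cong[OF this, of \<alpha>] show ?thesis using assms(5) by (simp add: trunc_def)
qed

lemma stab_Phi: assumes V: "V \<in> stab n k \<Gamma>" and k: "1 \<le> k" and r: "r \<in> {..<n} \<times> {..<n} \<times> {..<n} \<times> {..<n}"
  shows "Phi n \<Gamma> (\<lambda>p q. V p (ei q)) r = 0"
proof -
  obtain l i j q where r': "r = (l, i, j, q)" "l < n" "i < n" "j < n" "q < n" using r by auto
  have Vk: "V \<in> kalg n k" using V by (simp add: stab_def)
  note kf = kalg_facts[OF Vk]
  let ?a = "\<lambda>p q. V p (ei q)"
  have z: "\<forall>m. V m zi = 0" using kf(3) by simp
  have D2: "pdiff i' (pdiff j' (V l')) zi = D2f n \<Gamma> ?a l' i' j'" if "l' < n" "i' < n" "j' < n" for l' i' j'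
  proof -
    have "lie n V \<Gamma> l' i' j' zi = 0" using stab_lie0[OF V that] by simp
    then show ?thesis unfolding lie_zi[where V=V, OF z] D2f_def gc_def by simp
  qed
  have L1: "Rf n \<Gamma> ?a l' i' j' q' + pdiff q' (pdiff i' (pdiff j' (V l'))) zi = 0"
    if "l' < n" "i' < n" "j' < n" "q' < n" for l' i' j' q'
  proof -
    have "lie n V \<Gamma> l' i' j' (ei q') = 0" using stab_lie0[OF V that(1-3)] that(4) k by simp
    moreover have "lie n V \<Gamma> l' i' j' (ei q') = Rf n \<Gamma> ?a l' i' j' q' + pdiff q' (pdiff i' (pdiff j' (V l'))) zi"
    proof -
      have s1: "(\<Sum>m<n. \<Gamma> l' m j' zi * pdiff q' (pdiff i' (V m)) zi + \<Gamma> l' m j' (ei q') * V m (ei i'))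
        = (\<Sum>m<n. gc \<Gamma> l' m j' * D2f n \<Gamma> ?a m q' i' + hc \<Gamma> l' m j' q' * ?a m i')"
        by (rule sum.cong) (use that D2 in \<open>auto simp: gc_def hc_def\<close>)
      have s2: "(\<Sum>m<n. \<Gamma> l' i' m zi * pdiff q' (pdiff j' (V m)) zi + \<Gamma> l' i' m (ei q') * V m (ei j'))
        = (\<Sum>m<n. gc \<Gamma> l' i' m * D2f n \<Gamma> ?a m q' j' + hc \<Gamma> l' i' m q' * ?a m j')"
        by (rule sum.cong) (use that D2 in \<open>auto simp: gc_def hc_def\<close>)
      have s3: "(\<Sum>m<n. \<Gamma> m i' j' zi * pdiff q' (pdiff m (V l')) zi + \<Gamma> m i' j' (ei q') * V l' (ei m))
        = (\<Sum>m<n. gc \<Gamma> m i' j' * D2f n \<Gamma> ?a l' q' m + hc \<Gamma> m i' j' q' * ?a l' m)"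
        by (rule sum.cong) (use that D2 in \<open>auto simp: gc_def hc_def\<close>)
      show ?thesis unfolding lie_ei[where V=V, OF z] Rf_def s1 s2 s3 by (simp add: hc_def)
    qed
    ultimately show ?thesis by simp
  qed
  have "pdiff q (pdiff i (pdiff j (V l))) zi = pdiff i (pdiff q (pdiff j (V l))) zi"
    by (simp add: pdiff_comm)
  then show ?thesis using L1[of l i j q] L1[of l q j i] r' unfolding Phi_def by simp
qed


lemma D2f_add: "D2f n \<Gamma> (\<lambda>x y. a x y + b x y) l i j = D2f n \<Gamma> a l i j + D2f n \<Gamma> b l i j"
  by (simp add: D2f_def sum.distrib algebra_simps)
lemma D2f_smult: "D2f n \<Gamma> (\<lambda>x y. c * a x y) l i j = c * D2f n \<Gamma> a l i j"
  by (simp add: D2f_def sum_distrib_left algebra_simps)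
lemma Rf_add: "Rf n \<Gamma> (\<lambda>x y. a x y + b x y) l i j q = Rf n \<Gamma> a l i j q + Rf n \<Gamma> b l i j q"
  by (simp add: Rf_def D2f_add sum.distrib algebra_simps)
lemma Rf_smult: "Rf n \<Gamma> (\<lambda>x y. c * a x y) l i j q = c * Rf n \<Gamma> a l i j q"
  by (simp add: Rf_def D2f_smult sum_distrib_left algebra_simps)
lemma Phi_add: "Phi n \<Gamma> (\<lambda>x y. a x y + b x y) r = Phi n \<Gamma> a r + Phi n \<Gamma> b r"
  by (simp add: Phi_def Rf_add split: prod.splits)
lemma Phi_smult: "Phi n \<Gamma> (\<lambda>x y. c * a x y) r = c * Phi n \<Gamma> a r"
  by (simp add: Phi_def Rf_smult algebra_simps split: prod.splits)
lemma Phi_zero: "Phi n \<Gamma> (\<lambda>x y. 0) r = 0"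
  using Phi_smult[of n \<Gamma> 0 "\<lambda>x y. 0" r] by simp

lemma Phi_sum: "finite C \<Longrightarrow> Phi n \<Gamma> (\<lambda>x y. \<Sum>c\<in>C. f c * u c x y) r = (\<Sum>c\<in>C. f c * Phi n \<Gamma> (u c) r)"
proof (induction C rule: finite_induct)
  case empty then show ?case by (simp add: Phi_zero)
next
  case (insert c C)
  then show ?case by (simp add: Phi_add Phi_smult)
qed

lemma Phi_local: assumes "r \<in> {..<n} \<times> {..<n} \<times> {..<n} \<times> {..<n}" "\<forall>x<n. \<forall>y<n. a x y = b x y"
  shows "Phi n \<Gamma> a r = Phi n \<Gamma> b r"
proof -
  obtain l i j q where r: "r = (l, i, j, q)" "l < n" "i < n" "j < n" "q < n" using assms(1) by auto
  have D: "D2f n \<Gamma> a l' i' j' = D2f n \<Gamma> b l' i' j'" if "l' < n" "i' < n" "j' < n" for l' i' j'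
    unfolding D2f_def using that assms(2) by (simp cong: sum.cong_simp)
  have R: "Rf n \<Gamma> a l' i' j' q' = Rf n \<Gamma> b l' i' j' q'" if "l' < n" "i' < n" "j' < n" "q' < n" for l' i' j' q'
    unfolding Rf_def using that assms(2) D by (simp cong: sum.cong_simp)
  show ?thesis unfolding Phi_def r(1) using R r by simp
qed

definition unitc :: "nat \<Rightarrow> nat \<Rightarrow> nat \<Rightarrow> nat \<Rightarrow> real" where
  "unitc n c = (\<lambda>x y. if x = c div n \<and> y = c mod n then 1 else 0)"

lemma idx_lt: "x < n \<Longrightarrow> y < (n::nat) \<Longrightarrow> x * n + y < n * n"
proof -
  assume a: "x < n" "y < n"
  have "x * n + y < x * n + n" using a by simp
  also have "\<dots> = (x + 1) * n" by simp
  also have "\<dots> \<le> n * n" using a by (intro mult_right_mono) auto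
  finally show ?thesis .
qed

lemma recomb: assumes "x < n" "y < n"
  shows "(\<Sum>c<n*n. a (c div n) (c mod n) * unitc n c x y) = a x y"
proof -
  have pw: "a (c div n) (c mod n) * unitc n c x y = (if c = x * n + y then a x y else 0)" for c
  proof -
    have "(x = c div n \<and> y = c mod n) = (c = x * n + y)"
      using assms by (metis add.commute div_mult_mod_eq mod_less div_mult_self1 div_less add_0_right less_zeroE mod_mult_self2 mult.commute gr_implies_not0)
    then show ?thesis unfolding unitc_def by auto
  qed
  have "(\<Sum>c<n*n. a (c div n) (c mod n) * unitc n c x y) = (\<Sum>c<n*n. if c = x * n + y then a x y else 0)"
    by (rule sum.cong) (simp_all add: pw)
  also have "\<dots> = a x y" using idx_lt[OF assms] by simp
  finally show ?thesis .
qed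

lemma Phi_cols: assumes "r \<in> {..<n} \<times> {..<n} \<times> {..<n} \<times> {..<n}"
  shows "Phi n \<Gamma> a r = (\<Sum>c<n*n. a (c div n) (c mod n) * Phi n \<Gamma> (unitc n c) r)"
proof -
  have "Phi n \<Gamma> a r = Phi n \<Gamma> (\<lambda>x y. \<Sum>c<n*n. a (c div n) (c mod n) * unitc n c x y) r"
    by (rule Phi_local[OF assms]) (simp add: recomb)
  also have "\<dots> = (\<Sum>c<n*n. a (c div n) (c mod n) * Phi n \<Gamma> (unitc n c) r)"
    by (rule Phi_sum) simp
  finally show ?thesis .
qed


definition sc :: "nat \<Rightarrow> nat \<Rightarrow> nat" where "sc n l = Suc l mod n"

definition G0 :: "nat \<Rightarrow> nat \<Rightarrow> nat \<Rightarrow> nat \<Rightarrow> rpoly" where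
  "G0 n = (\<lambda>l i j \<alpha>. if l < n \<and> i = sc n l \<and> j = sc n l \<and> \<alpha> = ei l then 1 else 0)"

lemma sc_alt: "l < n \<Longrightarrow> sc n l = (if Suc l = n then 0 else Suc l)"
  by (auto simp: sc_def)
lemma sc_lt: "l < n \<Longrightarrow> sc n l < n"
  by (simp add: sc_alt)
lemma sc_ne: "l < n \<Longrightarrow> 2 \<le> n \<Longrightarrow> sc n l \<noteq> l"
  by (simp add: sc_alt)
lemma sc_sc_ne: "l < n \<Longrightarrow> 3 \<le> n \<Longrightarrow> sc n (sc n l) \<noteq> l"
  using sc_lt[of l n] by (auto simp: sc_alt split: if_splits)
lemma sc_inj: "l < n \<Longrightarrow> q < n \<Longrightarrow> sc n l = sc n q \<Longrightarrow> l = q"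
  by (auto simp: sc_alt split: if_splits)

lemma sc_surj: "p < n \<Longrightarrow> \<exists>l<n. sc n l = p"
proof -
  assume p: "p < n"
  show ?thesis
  proof (cases p)
    case 0
    then show ?thesis using p by (intro exI[of _ "n - 1"]) (auto simp: sc_alt)
  next
    case (Suc p')
    then show ?thesis using p by (intro exI[of _ p']) (auto simp: sc_alt)
  qed
qed

lemma gc_G0: "gc (G0 n) l i j = 0" by (simp add: gc_def G0_def)
lemma hc_G0: "hc (G0 n) l i j q = (if l < n \<and> i = sc n l \<and> j = sc n l \<and> q = l then 1 else 0)"
  by (auto simp: hc_def G0_def)

lemma Rf_G0: assumes "l < n" "q < n"
  shows "Rf n (G0 n) a l i j q = (if i = sc n l \<and> j = sc n l then a l q else 0)
     - (if i = sc n q \<and> j = sc n q then a l q else 0)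
     + (if j = sc n l \<and> q = l then a (sc n l) i else 0)
     + (if i = sc n l \<and> q = l then a (sc n l) j else 0)"
proof -
  have sl: "sc n l < n" using sc_lt assms by blast
  have p1: "a m q * hc (G0 n) l i j m = (if m = l then (if i = sc n l \<and> j = sc n l then a l q else 0) else 0)" for m
    unfolding hc_G0 using assms by simp
  have p2: "gc (G0 n) m i j * D2f n (G0 n) a l q m + hc (G0 n) m i j q * a l m
     = (if m = q then (if i = sc n q \<and> j = sc n q then a l q else 0) else 0)" for m
    unfolding hc_G0 gc_G0 using assms by simp
  have p3: "gc (G0 n) l m j * D2f n (G0 n) a m q i + hc (G0 n) l m j q * a m i
     = (if m = sc n l then (if j = sc n l \<and> q = l then a (sc n l) i else 0) else 0)" for m
    unfolding hc_G0 gc_G0 using assms by simp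
  have p4: "gc (G0 n) l i m * D2f n (G0 n) a m q j + hc (G0 n) l i m q * a m j
     = (if m = sc n l then (if i = sc n l \<and> q = l then a (sc n l) j else 0) else 0)" for m
    unfolding hc_G0 gc_G0 using assms by simp
  show ?thesis unfolding Rf_def p1 p2 p3 p4 by (simp only: sum.delta finite_lessThan lessThan_iff assms sl if_True)
qed

lemma G0_inj: assumes n3: "3 \<le> n"
  and Z: "\<forall>r\<in>{..<n} \<times> {..<n} \<times> {..<n} \<times> {..<n}. Phi n (G0 n) a r = 0"
  and p: "p < n" and q: "q < n"
  shows "a p q = 0"
proof -
  obtain l where l: "l < n" "sc n l = p" using sc_surj[OF p] by blast
  have sl: "sc n l < n" using sc_lt l by blast
  have ne: "sc n l \<noteq> l" using sc_ne[of l n] l(1) n3 by simp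
  have ne2: "sc n (sc n l) \<noteq> l" using sc_sc_ne[of l n] l(1) n3 by simp
  show ?thesis
  proof (cases "q = l")
    case True
    have "Phi n (G0 n) a (l, l, l, sc n l) = 0" using Z l sl by auto
    then have "- a (sc n l) l = 0"
      unfolding Phi_def using l sl ne ne2 by (simp add: Rf_G0)
    then show ?thesis using True l by simp
  next
    case False
    have "Phi n (G0 n) a (l, l, sc n l, q) = 0" using Z l sl q by auto
    moreover have "sc n q \<noteq> sc n l" using sc_inj[of l n q] l(1) q False by auto
    ultimately have "- (a (sc n l) q + (if q = sc n l then a (sc n l) (sc n l) else 0)) = 0"
      unfolding Phi_def using l sl ne ne2 q False by (simp add: Rf_G0)
    then show ?thesis using l by (auto split: if_splits)
  qed
qed

definition Rows :: "nat \<Rightarrow> (nat \<times> nat \<times> nat \<times> nat) set" where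
  "Rows n = {..<n} \<times> {..<n} \<times> {..<n} \<times> {..<n}"

definition colv :: "nat \<Rightarrow> (nat \<Rightarrow> nat \<Rightarrow> nat \<Rightarrow> rpoly) \<Rightarrow> nat \<Rightarrow> nat \<times> nat \<times> nat \<times> nat \<Rightarrow> real" where
  "colv n \<Gamma> c r = Phi n \<Gamma> (unitc n c) r"

definition gram :: "nat \<Rightarrow> (nat \<Rightarrow> nat \<Rightarrow> nat \<Rightarrow> rpoly) \<Rightarrow> real Matrix.mat" where
  "gram n \<Gamma> = Matrix.mat (n*n) (n*n) (\<lambda>(c, c'). \<Sum>r\<in>Rows n. colv n \<Gamma> c r * colv n \<Gamma> c' r)"

lemma finite_Rows[simp]: "finite (Rows n)" by (simp add: Rows_def)

lemma gram_carrier: "gram n \<Gamma> \<in> carrier_mat (n*n) (n*n)"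
  by (simp add: gram_def)

lemma gram_mult: fixes v :: "real Matrix.vec" assumes v: "v \<in> carrier_vec (n*n)" and va: "\<forall>c<n*n. v $ c = a (c div n) (c mod n)"
  and c: "c < n*n"
  shows "(gram n \<Gamma> *\<^sub>v v) $ c = (\<Sum>r\<in>Rows n. colv n \<Gamma> c r * Phi n \<Gamma> a r)"
proof -
  have "(gram n \<Gamma> *\<^sub>v v) $ c = (\<Sum>c'\<in>{0..<n*n}. (\<Sum>r\<in>Rows n. colv n \<Gamma> c r * colv n \<Gamma> c' r) * v $ c')"
    using v c by (simp add: gram_def scalar_prod_def)
  also have "\<dots> = (\<Sum>c'<n*n. \<Sum>r\<in>Rows n. colv n \<Gamma> c r * (a (c' div n) (c' mod n) * colv n \<Gamma> c' r))"
    by (rule sum.cong) (auto simp: va sum_distrib_right sum_distrib_left mult_ac atLeast0LessThan)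
  also have "\<dots> = (\<Sum>r\<in>Rows n. colv n \<Gamma> c r * (\<Sum>c'<n*n. a (c' div n) (c' mod n) * colv n \<Gamma> c' r))"
    by (simp add: sum.swap[of _ "{..<n*n}"] sum_distrib_left)
  also have "\<dots> = (\<Sum>r\<in>Rows n. colv n \<Gamma> c r * Phi n \<Gamma> a r)"
    by (rule sum.cong) (auto simp: Phi_cols[symmetric] Rows_def colv_def)
  finally show ?thesis .
qed

lemma gram_inj: assumes d: "Determinant.det (gram n \<Gamma>) \<noteq> 0" and Z: "\<forall>r\<in>Rows n. Phi n \<Gamma> a r = 0"
  and p: "p < n" and q: "q < n"
  shows "a p q = 0"
proof -
  define v where "v = Matrix.vec (n*n) (\<lambda>c. a (c div n) (c mod n))"
  have v: "v \<in> carrier_vec (n*n)" by (simp add: v_def)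
  have va: "\<forall>c<n*n. v $ c = a (c div n) (c mod n)" by (simp add: v_def)
  have "gram n \<Gamma> *\<^sub>v v = 0\<^sub>v (n*n)"
  proof (rule eq_vecI)
    fix c assume "c < dim_vec (0\<^sub>v (n*n) :: real Matrix.vec)"
    then have c: "c < n*n" by simp
    show "(gram n \<Gamma> *\<^sub>v v) $ c = 0\<^sub>v (n*n) $ c"
      unfolding gram_mult[OF v va c] using Z c by simp
  qed (simp add: gram_def)
  then have "v = 0\<^sub>v (n*n)"
    using d det_0_iff_vec_prod_zero[OF gram_carrier[of n \<Gamma>]] v by blast
  moreover have "p * n + q < n * n" using idx_lt p q by blast
  ultimately have "v $ (p * n + q) = 0" by simp
  moreover have "(p * n + q) div n = p" "(p * n + q) mod n = q" using p q by auto
  ultimately show ?thesis using va idx_lt[OF p q] by metis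
qed

lemma gram_nz: assumes I: "\<And>a. \<forall>r\<in>Rows n. Phi n \<Gamma> a r = 0 \<Longrightarrow> \<forall>p<n. \<forall>q<n. a p q = 0"
  shows "Determinant.det (gram n \<Gamma>) \<noteq> 0"
proof
  assume "Determinant.det (gram n \<Gamma>) = 0"
  then obtain v where v: "v \<in> carrier_vec (n*n)" "v \<noteq> 0\<^sub>v (n*n)" "gram n \<Gamma> *\<^sub>v v = 0\<^sub>v (n*n)"
    using det_0_iff_vec_prod_zero[OF gram_carrier[of n \<Gamma>]] by blast
  define a where "a = (\<lambda>p q. v $ (p * n + q))"
  have va: "\<forall>c<n*n. v $ c = a (c div n) (c mod n)" by (simp add: a_def)
  have "0 = (\<Sum>c<n*n. v $ c * (gram n \<Gamma> *\<^sub>v v) $ c)" using v(3) by simp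
  also have "\<dots> = (\<Sum>c<n*n. v $ c * (\<Sum>r\<in>Rows n. colv n \<Gamma> c r * Phi n \<Gamma> a r))"
    by (rule sum.cong) (simp_all add: gram_mult[OF v(1) va])
  also have "\<dots> = (\<Sum>r\<in>Rows n. (\<Sum>c<n*n. v $ c * colv n \<Gamma> c r) * Phi n \<Gamma> a r)"
    by (simp add: sum_distrib_left sum_distrib_right sum.swap[of _ "{..<n*n}"] mult_ac)
  also have "\<dots> = (\<Sum>r\<in>Rows n. Phi n \<Gamma> a r * Phi n \<Gamma> a r)"
    by (rule sum.cong) (auto simp: Phi_cols Rows_def va colv_def)
  finally have "(\<Sum>r\<in>Rows n. Phi n \<Gamma> a r * Phi n \<Gamma> a r) = 0" by simp
  then have "\<forall>r\<in>Rows n. Phi n \<Gamma> a r * Phi n \<Gamma> a r = 0"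
    by (subst (asm) sum_nonneg_eq_0_iff) auto
  then have "\<forall>r\<in>Rows n. Phi n \<Gamma> a r = 0" by simp
  then have z: "\<forall>p<n. \<forall>q<n. a p q = 0" using I by blast
  have "v = 0\<^sub>v (n*n)"
  proof (rule eq_vecI)
    fix c assume "c < dim_vec (0\<^sub>v (n*n) :: real Matrix.vec)"
    then have c: "c < n*n" by simp
    then have "n > 0" by (cases n) auto
    then have "c div n < n" "c mod n < n" using c by (auto simp: less_mult_imp_div_less)
    then show "v $ c = 0\<^sub>v (n*n) $ c" using va z c by simp
  qed (use v in simp)
  then show False using v(2) by simp
qed

definition jfil :: "nat \<Rightarrow> nat \<Rightarrow> (nat \<Rightarrow> nat \<Rightarrow> nat \<Rightarrow> rpoly) \<Rightarrow> (nat \<Rightarrow> nat \<Rightarrow> nat \<Rightarrow> rpoly) filter" where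
  "jfil n k \<Gamma> = (INF d\<in>{0::real<..}. principal {\<Gamma>'. \<Gamma>' \<in> Fjets n k \<and> jdist n k \<Gamma> \<Gamma>' < d})"

lemma eventually_jfil:
  "eventually P (jfil n k \<Gamma>) \<longleftrightarrow> (\<exists>d>0. \<forall>\<Gamma>'\<in>Fjets n k. jdist n k \<Gamma> \<Gamma>' < d \<longrightarrow> P \<Gamma>')"
proof -
  have "eventually P (jfil n k \<Gamma>) \<longleftrightarrow>
      (\<exists>d\<in>{0::real<..}. eventually P (principal {\<Gamma>'. \<Gamma>' \<in> Fjets n k \<and> jdist n k \<Gamma> \<Gamma>' < d}))"
    unfolding jfil_def
  proof (rule eventually_INF_base)
    show "{0::real<..} \<noteq> {}" by (auto intro: exI[of _ 1])
  next
    fix a b :: real assume "a \<in> {0<..}" "b \<in> {0<..}"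
    then show "\<exists>x\<in>{0<..}. principal {\<Gamma>'. \<Gamma>' \<in> Fjets n k \<and> jdist n k \<Gamma> \<Gamma>' < x}
        \<le> inf (principal {\<Gamma>'. \<Gamma>' \<in> Fjets n k \<and> jdist n k \<Gamma> \<Gamma>' < a})
              (principal {\<Gamma>'. \<Gamma>' \<in> Fjets n k \<and> jdist n k \<Gamma> \<Gamma>' < b})"
      by (intro bexI[of _ "min a b"]) auto
  qed
  then show ?thesis by (auto simp: eventually_principal)
qed

lemma jdist_coord: assumes "l < n" "i < n" "j < n" "\<alpha> \<in> mis n k"
  shows "\<bar>\<Gamma> l i j \<alpha> - \<Gamma>' l i j \<alpha>\<bar> \<le> jdist n k \<Gamma> \<Gamma>'"
proof -
  have f: "finite (mis n k)" by (rule mis_finite)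
  have "\<bar>\<Gamma> l i j \<alpha> - \<Gamma>' l i j \<alpha>\<bar> \<le> (\<Sum>\<alpha>\<in>mis n k. \<bar>\<Gamma> l i j \<alpha> - \<Gamma>' l i j \<alpha>\<bar>)"
    by (rule member_le_sum) (use assms f in auto)
  also have "\<dots> \<le> (\<Sum>j<n. \<Sum>\<alpha>\<in>mis n k. \<bar>\<Gamma> l i j \<alpha> - \<Gamma>' l i j \<alpha>\<bar>)"
    by (rule member_le_sum[where f = "\<lambda>j. \<Sum>\<alpha>\<in>mis n k. \<bar>\<Gamma> l i j \<alpha> - \<Gamma>' l i j \<alpha>\<bar>"])
       (use assms in \<open>auto intro: sum_nonneg\<close>)
  also have "\<dots> \<le> (\<Sum>i<n. \<Sum>j<n. \<Sum>\<alpha>\<in>mis n k. \<bar>\<Gamma> l i j \<alpha> - \<Gamma>' l i j \<alpha>\<bar>)"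
    by (rule member_le_sum[where f = "\<lambda>i. \<Sum>j<n. \<Sum>\<alpha>\<in>mis n k. \<bar>\<Gamma> l i j \<alpha> - \<Gamma>' l i j \<alpha>\<bar>"])
       (use assms in \<open>auto intro: sum_nonneg\<close>)
  also have "\<dots> \<le> jdist n k \<Gamma> \<Gamma>'"
    unfolding jdist_def
    by (rule member_le_sum[where f = "\<lambda>l. \<Sum>i<n. \<Sum>j<n. \<Sum>\<alpha>\<in>mis n k. \<bar>\<Gamma> l i j \<alpha> - \<Gamma>' l i j \<alpha>\<bar>"])
       (use assms in \<open>auto intro: sum_nonneg\<close>)
  finally show ?thesis .
qed

lemma Fjets_zero: assumes "\<Gamma> \<in> Fjets n k" "\<not> (l < n \<and> i < n \<and> j < n \<and> \<alpha> \<in> mis n k)"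
  shows "\<Gamma> l i j \<alpha> = 0"
proof (cases "l < n \<and> i < n \<and> j < n")
  case True
  then have "\<alpha> \<notin> mis n k" using assms(2) by blast
  moreover have "\<Gamma> l i j \<in> polys n k" using assms(1) by (simp add: Fjets_def)
  ultimately show ?thesis by (auto simp: polys_def)
next
  case False
  then have "n \<le> l \<or> n \<le> i \<or> n \<le> j" by auto
  then show ?thesis using assms(1) unfolding Fjets_def by auto
qed

lemma coord_tendsto: assumes G: "\<Gamma> \<in> Fjets n k"
  shows "((\<lambda>\<Gamma>'. \<Gamma>' l i j \<alpha>) \<longlongrightarrow> \<Gamma> l i j \<alpha>) (jfil n k \<Gamma>)"
proof (cases "l < n \<and> i < n \<and> j < n \<and> \<alpha> \<in> mis n k")
  case True
  show ?thesis
  proof (rule tendstoI)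
    fix e :: real assume e: "0 < e"
    show "eventually (\<lambda>\<Gamma>'. dist (\<Gamma>' l i j \<alpha>) (\<Gamma> l i j \<alpha>) < e) (jfil n k \<Gamma>)"
      unfolding eventually_jfil
    proof (intro exI[of _ e] conjI ballI impI e)
      fix \<Gamma>' assume "jdist n k \<Gamma> \<Gamma>' < e"
      then show "dist (\<Gamma>' l i j \<alpha>) (\<Gamma> l i j \<alpha>) < e"
        using jdist_coord[of l n i j \<alpha> k \<Gamma> \<Gamma>'] True by (simp add: dist_real_def abs_minus_commute)
    qed
  qed
next
  case False
  have "eventually (\<lambda>\<Gamma>'. \<Gamma>' l i j \<alpha> = \<Gamma> l i j \<alpha>) (jfil n k \<Gamma>)"
    unfolding eventually_jfil using Fjets_zero[OF G False] Fjets_zero[OF _ False]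
    by (intro exI[of _ 1]) auto
  then show ?thesis by (rule tendsto_eventually)
qed

lemma det_mat_formula: "Determinant.det (Matrix.mat N N h) =
   (\<Sum>p\<in>{p. p permutes {0..<N}}. signof p * (\<Prod>i=0..<N. h (i, p i)))"
proof -
  have "Determinant.det (Matrix.mat N N h) = (\<Sum>p\<in>{p. p permutes {0..<N}}. signof p * (\<Prod>i=0..<N. Matrix.mat N N h $$ (i, p i)))"
    by (rule det_def') simp
  also have "\<dots> = (\<Sum>p\<in>{p. p permutes {0..<N}}. signof p * (\<Prod>i=0..<N. h (i, p i)))"
  proof (rule sum.cong[OF refl])
    fix p assume "p \<in> {p. p permutes {0..<N}}"
    then have p: "p permutes {0..<N}" by simp
    have "\<And>i. i \<in> {0..<N} \<Longrightarrow> p i \<in> {0..<N}" using permutes_in_image[OF p] by simp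
    then show "signof p * (\<Prod>i=0..<N. Matrix.mat N N h $$ (i, p i)) = signof p * (\<Prod>i=0..<N. h (i, p i))"
      by (intro arg_cong[where f = "\<lambda>x. signof p * x"] prod.cong) auto
  qed
  finally show ?thesis .
qed

lemma det_tendsto: fixes f :: "'x \<Rightarrow> nat \<times> nat \<Rightarrow> real" assumes "\<And>i j. i < N \<Longrightarrow> j < N \<Longrightarrow> ((\<lambda>x. f x (i, j)) \<longlongrightarrow> g (i, j)) F"
  shows "((\<lambda>x. Determinant.det (Matrix.mat N N (f x))) \<longlongrightarrow> Determinant.det (Matrix.mat N N g)) F"
  unfolding det_mat_formula
proof (rule Limits.tendsto_sum)
  fix p assume "p \<in> {p. p permutes {0..<N}}"
  then have p: "p permutes {0..<N}" by simp
  have "((\<lambda>x. \<Prod>i=0..<N. f x (i, p i)) \<longlongrightarrow> (\<Prod>i=0..<N. g (i, p i))) F"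
  proof (rule Limits.tendsto_prod)
    fix i assume "i \<in> {0..<N}"
    then have "i < N" "p i < N" using permutes_in_image[OF p, of i] by auto
    then show "((\<lambda>x. f x (i, p i)) \<longlongrightarrow> g (i, p i)) F" using assms by blast
  qed
  then show "((\<lambda>x. signof p * (\<Prod>i=0..<N. f x (i, p i))) \<longlongrightarrow> signof p * (\<Prod>i=0..<N. g (i, p i))) F"
    by (rule tendsto_mult[OF tendsto_const])
qed

lemma Rf_tendsto: assumes G: "\<Gamma> \<in> Fjets n k"
  shows "((\<lambda>\<Gamma>'. Rf n \<Gamma>' a l i j q) \<longlongrightarrow> Rf n \<Gamma> a l i j q) (jfil n k \<Gamma>)"
  unfolding Rf_def D2f_def gc_def hc_def
  by (intro tendsto_sum tendsto_mult tendsto_add tendsto_diff tendsto_minus tendsto_const coord_tendsto[OF G])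

lemma colv_tendsto: assumes G: "\<Gamma> \<in> Fjets n k"
  shows "((\<lambda>\<Gamma>'. colv n \<Gamma>' c r) \<longlongrightarrow> colv n \<Gamma> c r) (jfil n k \<Gamma>)"
proof -
  obtain l i j q where r: "r = (l, i, j, q)" by (cases r) auto
  have e: "colv n \<Gamma>' c r = Rf n \<Gamma>' (unitc n c) l i j q - Rf n \<Gamma>' (unitc n c) l q j i" for \<Gamma>'
    by (simp add: colv_def Phi_def r)
  show ?thesis unfolding e by (intro tendsto_diff Rf_tendsto[OF G])
qed

lemma gram_tendsto: assumes G: "\<Gamma> \<in> Fjets n k"
  shows "((\<lambda>\<Gamma>'. Determinant.det (gram n \<Gamma>')) \<longlongrightarrow> Determinant.det (gram n \<Gamma>)) (jfil n k \<Gamma>)"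
  unfolding gram_def
  by (rule det_tendsto) (simp, intro tendsto_sum tendsto_mult colv_tendsto[OF G])

definition goodU :: "nat \<Rightarrow> nat \<Rightarrow> (nat \<Rightarrow> nat \<Rightarrow> nat \<Rightarrow> rpoly) set" where
  "goodU n k = {\<Gamma> \<in> Fjets n k. Determinant.det (gram n \<Gamma>) \<noteq> 0}"

lemma goodU_open: "open_in_F n k (goodU n k)"
  unfolding open_in_F_def
proof (intro conjI ballI)
  show "goodU n k \<subseteq> Fjets n k" by (auto simp: goodU_def)
next
  fix \<Gamma> assume "\<Gamma> \<in> goodU n k"
  then have G: "\<Gamma> \<in> Fjets n k" and d: "Determinant.det (gram n \<Gamma>) \<noteq> 0" by (auto simp: goodU_def)
  have "eventually (\<lambda>\<Gamma>'. Determinant.det (gram n \<Gamma>') \<noteq> 0) (jfil n k \<Gamma>)"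
    by (rule tendsto_imp_eventually_ne[OF gram_tendsto[OF G] d])
  then obtain e where "e > 0" "\<forall>\<Gamma>'\<in>Fjets n k. jdist n k \<Gamma> \<Gamma>' < e \<longrightarrow> Determinant.det (gram n \<Gamma>') \<noteq> 0"
    unfolding eventually_jfil by blast
  then show "\<exists>e>0. \<forall>\<Gamma>'\<in>Fjets n k. jdist n k \<Gamma> \<Gamma>' < e \<longrightarrow> \<Gamma>' \<in> goodU n k"
    by (auto simp: goodU_def)
qed

lemma G0_Fjets: assumes "1 \<le> k" shows "G0 n \<in> Fjets n k"
proof -
  have "G0 n l i j \<in> polys n k" for l i j
    using assms by (auto simp: polys_def G0_def mis_def)
  moreover have "G0 n l i j = G0 n l j i" for l i j by (auto simp: G0_def fun_eq_iff)
  moreover have "G0 n l i j = (\<lambda>_. 0)" if "n \<le> l \<or> n \<le> i \<or> n \<le> j" for l i j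
    using that sc_lt[of l n] by (auto simp: G0_def fun_eq_iff)
  ultimately show ?thesis by (auto simp: Fjets_def)
qed

definition shift :: "nat \<Rightarrow> (nat \<Rightarrow> nat \<Rightarrow> nat \<Rightarrow> rpoly) \<Rightarrow> real \<Rightarrow> (nat \<Rightarrow> nat \<Rightarrow> nat \<Rightarrow> rpoly)" where
  "shift n \<Gamma> s = (\<lambda>l i j \<alpha>. \<Gamma> l i j \<alpha> + s * G0 n l i j \<alpha>)"

lemma shift_Fjets: assumes "\<Gamma> \<in> Fjets n k" "1 \<le> k" shows "shift n \<Gamma> s \<in> Fjets n k"
proof -
  have G: "G0 n \<in> Fjets n k" by (rule G0_Fjets[OF assms(2)])
  show ?thesis using assms(1) G unfolding Fjets_def polys_def shift_def
    by (auto simp: fun_eq_iff) (metis add.right_neutral mult_zero_right)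
qed

lemma jdist_shift: "jdist n k \<Gamma> (shift n \<Gamma> s) = \<bar>s\<bar> * jdist n k (\<lambda>_ _ _ _. 0) (G0 n)"
  unfolding jdist_def shift_def by (simp add: sum_distrib_left abs_mult)

lemma gc_shift: "gc (shift n \<Gamma> s) l i j = gc \<Gamma> l i j"
  by (simp add: gc_def shift_def G0_def)
lemma hc_shift: "hc (shift n \<Gamma> s) l i j q = hc \<Gamma> l i j q + s * hc (G0 n) l i j q"
  by (simp add: hc_def shift_def)
lemma D2f_shift: "D2f n (shift n \<Gamma> s) a l i j = D2f n \<Gamma> a l i j"
  by (simp add: D2f_def gc_shift)
lemma D2f_G0: "D2f n (G0 n) a l i j = 0"
  by (simp add: D2f_def gc_G0)
lemma Rf_shift: "Rf n (shift n \<Gamma> s) a l i j q = Rf n \<Gamma> a l i j q + s * Rf n (G0 n) a l i j q"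
  unfolding Rf_def D2f_shift gc_shift hc_shift D2f_G0 gc_G0
  by (simp add: sum.distrib sum_distrib_left algebra_simps)
lemma colv_shift: "colv n (shift n \<Gamma> s) c r = colv n \<Gamma> c r + s * colv n (G0 n) c r"
  by (cases r) (simp add: colv_def Phi_def Rf_shift algebra_simps)

lemma sum_abs_bound: "finite R \<Longrightarrow> u \<in> R \<Longrightarrow> \<bar>u::real\<bar> \<le> (\<Sum>v\<in>R. \<bar>v\<bar>)"
  by (rule member_le_sum[where f = abs]) auto

lemma goodU_dense: assumes n3: "3 \<le> n" and k: "1 \<le> k"
  shows "dense_in_F n k (goodU n k)"
  unfolding dense_in_F_def
proof (intro ballI allI impI)
  fix \<Gamma> and e :: real assume G: "\<Gamma> \<in> Fjets n k" and e: "0 < e"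
  define N where "N = n * n"
  define x where "x = colv n \<Gamma>"
  define y where "y = colv n (G0 n)"
  define Gm where "Gm u = Matrix.mat N N (\<lambda>(c, c'). \<Sum>r\<in>Rows n. (u * x c r + y c r) * (u * x c' r + y c' r))" for u
  define Q where "Q = Determinant.det (Matrix.mat N N (\<lambda>(c, c'). [: \<Sum>r\<in>Rows n. y c r * y c' r,
      \<Sum>r\<in>Rows n. x c r * y c' r + y c r * x c' r, \<Sum>r\<in>Rows n. x c r * x c' r :]))"
  have PQ: "poly Q u = Determinant.det (Gm u)" for u
  proof -
    interpret ph: comm_ring_hom "\<lambda>p::real poly. poly p u" by unfold_locales auto
    have "poly Q u = Determinant.det (map_mat (\<lambda>p. poly p u) (Matrix.mat N N (\<lambda>(c, c'). [: \<Sum>r\<in>Rows n. y c r * y c' r,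
      \<Sum>r\<in>Rows n. x c r * y c' r + y c r * x c' r, \<Sum>r\<in>Rows n. x c r * x c' r :])))"
      unfolding Q_def by (rule ph.hom_det[symmetric])
    also have "map_mat (\<lambda>p. poly p u) (Matrix.mat N N (\<lambda>(c, c'). [: \<Sum>r\<in>Rows n. y c r * y c' r,
      \<Sum>r\<in>Rows n. x c r * y c' r + y c r * x c' r, \<Sum>r\<in>Rows n. x c r * x c' r :])) = Gm u"
      unfolding Gm_def
      by (rule eq_matI) (auto simp: sum.distrib sum_distrib_left algebra_simps)
    finally show ?thesis .
  qed
  have Gm0: "Gm 0 = gram n (G0 n)"
    unfolding Gm_def gram_def N_def y_def by simp
  have d0: "Determinant.det (gram n (G0 n)) \<noteq> 0"
    by (rule gram_nz) (use G0_inj[OF n3] in \<open>auto simp: Rows_def\<close>)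
  have Qnz: "Q \<noteq> 0" using PQ[of 0] Gm0 d0 by auto
  define R where "R = {u. poly Q u = 0}"
  have fR: "finite R" unfolding R_def by (rule poly_roots_finite[OF Qnz])
  define B where "B = (\<Sum>v\<in>R. \<bar>v\<bar>)"
  have B0: "0 \<le> B" unfolding B_def by (rule sum_nonneg) auto
  define J where "J = jdist n k (\<lambda>_ _ _ _. 0) (G0 n)"
  have J0: "0 \<le> J" unfolding J_def jdist_def by (intro sum_nonneg) auto
  have Je: "0 \<le> J / e" using J0 e by simp
  define u where "u = B + J / e + 1"
  have u0: "0 < u" using B0 Je by (simp add: u_def add_nonneg_pos)
  have Qu: "poly Q u \<noteq> 0"
  proof
    assume "poly Q u = 0"
    then have "u \<in> R" by (simp add: R_def)
    then have "\<bar>u\<bar> \<le> B" unfolding B_def using sum_abs_bound[OF fR] by blast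
    then show False using u0 Je by (simp add: u_def)
  qed
  define s where "s = 1 / u"
  have s0: "0 < s" using u0 by (simp add: s_def)
  have su: "s * u = 1" using u0 by (simp add: s_def)
  have gs: "gram n (shift n \<Gamma> s) = (s^2) \<cdot>\<^sub>m Gm u"
  proof (rule eq_matI)
    fix c c' assume "c < dim_row (s\<^sup>2 \<cdot>\<^sub>m Gm u)" "c' < dim_col (s\<^sup>2 \<cdot>\<^sub>m Gm u)"
    then have c: "c < N" "c' < N" by (auto simp: Gm_def)
    have "(x c r + s * y c r) * (x c' r + s * y c' r) = s^2 * ((u * x c r + y c r) * (u * x c' r + y c' r))" for r
    proof -
      have "s^2 * ((u * x c r + y c r) * (u * x c' r + y c' r)) = ((s * u) * x c r + s * y c r) * ((s * u) * x c' r + s * y c' r)"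
        by (simp add: algebra_simps power2_eq_square)
      then show ?thesis by (simp add: su)
    qed
    then show "gram n (shift n \<Gamma> s) $$ (c, c') = (s\<^sup>2 \<cdot>\<^sub>m Gm u) $$ (c, c')"
      using c by (simp add: gram_def Gm_def N_def colv_shift x_def y_def sum_distrib_left)
  qed (auto simp: gram_def Gm_def N_def)
  have "Determinant.det (gram n (shift n \<Gamma> s)) = (s^2) ^ N * Determinant.det (Gm u)"
    unfolding gs by (simp add: Gm_def)
  then have dnz: "Determinant.det (gram n (shift n \<Gamma> s)) \<noteq> 0" using s0 Qu PQ[of u] by simp
  have inU: "shift n \<Gamma> s \<in> goodU n k"
    using dnz shift_Fjets[OF G k] by (simp add: goodU_def)
  have "jdist n k \<Gamma> (shift n \<Gamma> s) = J / u" using s0 by (simp add: jdist_shift J_def s_def)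
  also have "\<dots> < e"
  proof -
    have "J < e * u" using e B0 J0 by (simp add: u_def algebra_simps add_pos_nonneg mult_nonneg_nonneg)
    then show ?thesis using u0 by (simp add: divide_less_eq mult.commute)
  qed
  finally show "\<exists>\<Gamma>'\<in>goodU n k. jdist n k \<Gamma> \<Gamma>' < e" using inU by blast
qed

lemma mdeg1: assumes "\<beta> \<in> MI n" "mdeg n \<beta> = 1" shows "\<exists>q<n. \<beta> = ei q"
proof -
  obtain \<gamma> i where g: "\<gamma> \<in> MI n" "mdeg n \<gamma> = 0" "i < n" "\<beta> = \<gamma>(i := \<gamma> i + 1)"
    using decomp1[OF assms(1), of 0] assms(2) by auto
  have "\<gamma> = zi" using mdeg0[OF g(1,2)] .
  then have "\<beta> = ei i" using g(4) by (simp add: zi_upd)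
  then show ?thesis using g(3) by blast
qed

lemma lie_zero: "lie n (\<lambda>_ _. 0) \<Gamma> l i j \<alpha> = 0"
proof -
  have p1: "pdiff m (\<lambda>_. 0) = (\<lambda>_. 0)" for m by (simp add: pdiff_def fun_eq_iff)
  have p2: "pmult (\<lambda>_. 0) q = (\<lambda>_. 0)" for q by (simp add: pmult_def fun_eq_iff)
  have p3: "pmult q (\<lambda>_. 0) = (\<lambda>_. 0)" for q by (simp add: pmult_def fun_eq_iff)
  show ?thesis unfolding lie_def p1 p2 p3 by simp
qed

lemma zero_stab: "(\<lambda>_ _. 0) \<in> stab n k \<Gamma>"
proof -
  have "(\<lambda>_ _. 0) \<in> kalg n k" by (simp add: kalg_def polys_def)
  moreover have "trunc n k (lie n (\<lambda>_ _. 0) \<Gamma> l i j) = (\<lambda>_. 0)" for l i j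
    unfolding trunc_def using lie_zero[of n \<Gamma> l i j] by (simp add: fun_eq_iff)
  ultimately show ?thesis by (simp add: stab_def)
qed

lemma low_from_lin: assumes V: "V \<in> kalg n k" and lin: "\<forall>p<n. \<forall>q<n. V p (ei q) = 0"
  shows "\<forall>m \<beta>. \<beta> \<in> MI n \<longrightarrow> mdeg n \<beta> \<le> 1 \<longrightarrow> V m \<beta> = 0"
proof (intro allI impI)
  fix m \<beta> assume b: "\<beta> \<in> MI n" "mdeg n \<beta> \<le> 1"
  note kf = kalg_facts[OF V]
  show "V m \<beta> = 0"
  proof (cases "mdeg n \<beta> = 0")
    case True then show ?thesis using mdeg0[OF b(1)] kf(3) by simp
  next
    case False
    then have "mdeg n \<beta> = 1" using b(2) by simp
    then obtain q where q: "q < n" "\<beta> = ei q" using mdeg1 b(1) by blast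
    show ?thesis
    proof (cases "m < n")
      case True then show ?thesis using lin q by simp
    next
      case False then show ?thesis using kf(4)[of m] by simp
    qed
  qed
qed

lemma goodU_stab: assumes k: "1 \<le> k" and G: "\<Gamma> \<in> goodU n k"
  shows "stab n k \<Gamma> = {(\<lambda>_ _. 0)}"
proof
  show "{(\<lambda>_ _. 0)} \<subseteq> stab n k \<Gamma>" using zero_stab by simp
next
  show "stab n k \<Gamma> \<subseteq> {(\<lambda>_ _. 0)}"
  proof
    fix V assume V: "V \<in> stab n k \<Gamma>"
    have Vk: "V \<in> kalg n k" using V by (simp add: stab_def)
    have d: "Determinant.det (gram n \<Gamma>) \<noteq> 0" using G by (simp add: goodU_def)
    have Z: "\<forall>r\<in>Rows n. Phi n \<Gamma> (\<lambda>p q. V p (ei q)) r = 0"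
      using stab_Phi[OF V k] by (auto simp: Rows_def)
    have lin: "\<forall>p<n. \<forall>q<n. V p (ei q) = 0"
      using gram_inj[OF d Z] by blast
    have "V = (\<lambda>_ _. 0)"
      by (rule vanish[OF Vk _ low_from_lin[OF Vk lin]]) (use stab_lie0[OF V] in blast)
    then show "V \<in> {(\<lambda>_ _. 0)}" by simp
  qed
qed

theorem part2: assumes "3 \<le> n"
  shows "\<forall>k\<ge>1. \<exists>U. open_in_F n k U \<and> dense_in_F n k U \<and> (\<forall>\<Gamma>\<in>U. stab n k \<Gamma> = {(\<lambda>_ _. 0)})"
proof (intro allI impI)
  fix k :: nat assume k: "1 \<le> k"
  show "\<exists>U. open_in_F n k U \<and> dense_in_F n k U \<and> (\<forall>\<Gamma>\<in>U. stab n k \<Gamma> = {(\<lambda>_ _. 0)})"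
    using goodU_open goodU_dense[OF assms k] goodU_stab[OF k] by blast
qed

definition eij :: "nat \<Rightarrow> nat \<Rightarrow> mindex" where "eij i j = (\<lambda>t. ei i t + ei j t)"

lemma eij_apply: "eij i j t = (if t = i then 1 else 0) + (if t = j then 1 else 0)"
  by (simp add: eij_def ei_apply)

lemma eij_MI: "i < n \<Longrightarrow> j < n \<Longrightarrow> eij i j \<in> MI n"
  by (auto simp: MI_def eij_apply)

lemma mdeg_eij: assumes "i < n" "j < n" shows "mdeg n (eij i j) = 2"
proof -
  have "mdeg n (eij i j) = (\<Sum>t<n. (if t = i then 1 else 0) + (if t = j then 1 else 0))"
    unfolding mdeg_def eij_apply ..
  also have "\<dots> = 2" using assms by (simp add: sum.distrib)
  finally show ?thesis .
qed

lemma eij_comm: "eij i j = eij j i" by (simp add: eij_def fun_eq_iff)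

lemma eij_ge1: "1 \<le> eij a b a" by (simp add: eij_apply)
lemma eij_zero: "t \<noteq> a \<Longrightarrow> t \<noteq> b \<Longrightarrow> eij a b t = 0" by (simp add: eij_apply)
lemma eij_mem: "eij a b = eij c d \<Longrightarrow> a = c \<or> a = d"
proof (rule ccontr)
  assume e: "eij a b = eij c d" and "\<not> (a = c \<or> a = d)"
  then have "eij c d a = 0" by (simp add: eij_zero)
  moreover have "1 \<le> eij a b a" by (rule eij_ge1)
  ultimately show False using e by simp
qed

lemma eij_eq: assumes "i \<le> j" "i' \<le> j'" "eij i j = eij i' j'" shows "i = i' \<and> j = j'"
proof -
  have a: "i = i' \<or> i = j'" using eij_mem[OF assms(3)] .
  have b: "i' = i \<or> i' = j" using eij_mem[OF assms(3)[symmetric]] .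
  have c: "j = i' \<or> j = j'" using eij_mem[of j i i' j'] assms(3) eij_comm[of i j] by simp
  have d: "j' = i \<or> j' = j" using eij_mem[of j' i' i j] assms(3) eij_comm[of i' j'] by simp
  show ?thesis
  proof (cases "i = i'")
    case True
    then show ?thesis using c d by auto
  next
    case False
    then have "i = j'" "i' = j" using a b by auto
    then show ?thesis using assms(1,2) False by linarith
  qed
qed

lemma eij_ne_zi: "eij i j \<noteq> zi"
proof
  assume "eij i j = zi"
  then have "eij i j i = zi i" by simp
  then show False by (simp add: eij_apply)
qed

lemma eij_ne_ei: "eij i j \<noteq> ei q"
proof
  assume e: "eij i j = ei q"
  have "1 \<le> eij i j i" by (rule eij_ge1)
  then have "1 \<le> ei q i" using e by simp
  then have iq: "i = q" by (cases "i = q") auto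
  have "1 \<le> eij i j j" using eij_ge1[of j i] eij_comm[of i j] by simp
  then have "1 \<le> ei q j" using e by simp
  then have jq: "j = q" by (cases "j = q") auto
  have "eij i j i = 2" using iq jq by (simp add: eij_apply)
  moreover have "ei q i = 1" using iq by simp
  ultimately show False using e by simp
qed

lemma pdiff2_zi: "pdiff i (pdiff j p) zi = (if i = j then 2 else 1) * p (eij i j)"
proof -
  have e: "(zi(i := zi i + 1))(j := (zi(i := zi i + 1)) j + 1) = eij i j"
    by (auto simp: fun_eq_iff eij_apply)
  show ?thesis unfolding pdiff2 e by auto
qed

definition Qf :: "nat \<Rightarrow> (nat \<Rightarrow> nat \<Rightarrow> nat \<Rightarrow> rpoly) \<Rightarrow> (nat \<Rightarrow> rpoly) \<Rightarrow> nat \<Rightarrow> rpoly" where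
  "Qf n \<Gamma> W l \<alpha> = (\<Sum>i<n. \<Sum>j<n. if \<alpha> = eij i j \<and> i \<le> j
      then D2f n \<Gamma> (\<lambda>p q. W p (ei q)) l i j / (if i = j then 2 else 1) else 0)"

lemma Qf_eij: assumes "i \<le> j" "j < n"
  shows "Qf n \<Gamma> W l (eij i j) = D2f n \<Gamma> (\<lambda>p q. W p (ei q)) l i j / (if i = j then 2 else 1)"
proof -
  define X where "X = (\<lambda>i j. D2f n \<Gamma> (\<lambda>p q. W p (ei q)) l i j / (if i = j then 2 else 1))"
  have pw: "(if eij i j = eij i' j' \<and> i' \<le> j' then X i' j' else 0) = (if i' = i then (if j' = j then X i' j' else 0) else 0)"
    for i' j'
  proof (cases "i' = i \<and> j' = j")
    case True then show ?thesis using assms(1) by simp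
  next
    case False
    then have "\<not> (eij i j = eij i' j' \<and> i' \<le> j')" using eij_eq[OF assms(1), of i' j'] by blast
    then show ?thesis using False by auto
  qed
  have inner: "(\<Sum>j'<n. if i' = i then (if j' = j then X i' j' else 0) else 0) = (if i' = i then X i' j else 0)" for i'
    by (cases "i' = i") (simp_all add: assms(2))
  have "Qf n \<Gamma> W l (eij i j) = (\<Sum>i'<n. \<Sum>j'<n. if eij i j = eij i' j' \<and> i' \<le> j' then X i' j' else 0)"
    unfolding Qf_def X_def ..
  also have "\<dots> = (\<Sum>i'<n. \<Sum>j'<n. if i' = i then (if j' = j then X i' j' else 0) else 0)"
    unfolding pw ..
  also have "\<dots> = (\<Sum>i'<n. if i' = i then X i' j else 0)" unfolding inner ..
  also have "\<dots> = X i j" using assms by simp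
  finally show ?thesis unfolding X_def .
qed

lemma Qf_supp: assumes "Qf n \<Gamma> W l \<alpha> \<noteq> 0" shows "\<exists>i<n. \<exists>j<n. \<alpha> = eij i j"
proof (rule ccontr)
  assume "\<not> ?thesis"
  then have "Qf n \<Gamma> W l \<alpha> = 0" unfolding Qf_def by (intro sum.neutral ballI) auto
  then show False using assms by simp
qed

lemma D2f_sym: assumes "\<Gamma> \<in> Fjets n k" shows "D2f n \<Gamma> a l i j = D2f n \<Gamma> a l j i"
proof -
  have s: "gc \<Gamma> l' i' j' = gc \<Gamma> l' j' i'" for l' i' j' using assms by (simp add: Fjets_def gc_def)
  have 1: "(\<Sum>m<n. gc \<Gamma> m i j * a l m) = (\<Sum>m<n. gc \<Gamma> m j i * a l m)"
    by (rule sum.cong) (auto simp: s[of _ i j])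
  have 2: "(\<Sum>m<n. gc \<Gamma> l m j * a m i) = (\<Sum>m<n. gc \<Gamma> l j m * a m i)"
    by (rule sum.cong) (auto simp: s[of l _ j])
  have 3: "(\<Sum>m<n. gc \<Gamma> l i m * a m j) = (\<Sum>m<n. gc \<Gamma> l m i * a m j)"
    by (rule sum.cong) (auto simp: s[of l i])
  show ?thesis unfolding D2f_def 1 2 3 by simp
qed

lemma Qf_D2: assumes G: "\<Gamma> \<in> Fjets n k" and "i < n" "j < n"
  shows "(if i = j then 2 else 1) * Qf n \<Gamma> W l (eij i j) = D2f n \<Gamma> (\<lambda>p q. W p (ei q)) l i j"
proof (cases "i \<le> j")
  case True then show ?thesis using Qf_eij[OF True assms(3)] by simp
next
  case False
  then have "j \<le> i" by simp
  then show ?thesis using Qf_eij[OF \<open>j \<le> i\<close> assms(2), of \<Gamma> W l] eij_comm[of i j] D2f_sym[OF G] False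
    by simp
qed

definition extv :: "nat \<Rightarrow> (nat \<Rightarrow> nat \<Rightarrow> nat \<Rightarrow> rpoly) \<Rightarrow> (nat \<Rightarrow> rpoly) \<Rightarrow> (nat \<Rightarrow> rpoly)" where
  "extv n \<Gamma> W = (\<lambda>l \<alpha>. W l \<alpha> + Qf n \<Gamma> W l \<alpha>)"

lemma linvf_facts: assumes "W \<in> linvf n"
  shows "\<And>l \<alpha>. W l \<alpha> \<noteq> 0 \<Longrightarrow> \<alpha> \<in> MI n \<and> mdeg n \<alpha> = 1" "\<And>l. n \<le> l \<Longrightarrow> W l = (\<lambda>_. 0)"
  using assms by (auto simp: linvf_def)

lemma W_eij: "W \<in> linvf n \<Longrightarrow> i < n \<Longrightarrow> j < n \<Longrightarrow> W l (eij i j) = 0"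
  using linvf_facts(1)[of W n l "eij i j"] mdeg_eij[of i n j] by auto

lemma Qf_ei: "Qf n \<Gamma> W l (ei q) = 0"
  using Qf_supp[of n \<Gamma> W l "ei q"] eij_ne_ei by metis

lemma ext_lin: "extv n \<Gamma> W p (ei q) = W p (ei q)"
  by (simp add: extv_def Qf_ei)

lemma Qf_high: assumes G: "\<Gamma> \<in> Fjets n k" and W: "W \<in> linvf n" and l: "n \<le> l"
  shows "Qf n \<Gamma> W l \<alpha> = 0"
proof -
  have D: "D2f n \<Gamma> (\<lambda>p q. W p (ei q)) l i j = 0" for i j
  proof -
    have g: "gc \<Gamma> l m j' = 0" for m j' using G l by (simp add: Fjets_def gc_def)
    have a: "W l (ei m) = 0" for m using linvf_facts(2)[OF W l] by simp
    show ?thesis unfolding D2f_def by (simp add: g a)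
  qed
  show ?thesis unfolding Qf_def by (intro sum.neutral ballI) (simp add: D)
qed

lemma ext_kalg: assumes G: "\<Gamma> \<in> Fjets n k" and W: "W \<in> linvf n"
  shows "extv n \<Gamma> W \<in> kalg n 0"
proof -
  have p: "extv n \<Gamma> W l \<in> polys n 2" for l
    unfolding polys_def
  proof (intro CollectI allI impI)
    fix \<alpha> assume "extv n \<Gamma> W l \<alpha> \<noteq> 0"
    then have "W l \<alpha> \<noteq> 0 \<or> Qf n \<Gamma> W l \<alpha> \<noteq> 0" by (auto simp: extv_def)
    then show "\<alpha> \<in> mis n 2"
    proof
      assume "W l \<alpha> \<noteq> 0" then show ?thesis using linvf_facts(1)[OF W] by (auto simp: mis_def)
    next
      assume "Qf n \<Gamma> W l \<alpha> \<noteq> 0"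
      then obtain i j where "i < n" "j < n" "\<alpha> = eij i j" using Qf_supp by blast
      then show ?thesis using eij_MI mdeg_eij by (auto simp: mis_def)
    qed
  qed
  have z: "extv n \<Gamma> W l zi = 0" for l
  proof -
    have "W l zi = 0" using linvf_facts(1)[OF W, of l zi] by auto
    moreover have "Qf n \<Gamma> W l zi = 0" using Qf_supp[of n \<Gamma> W l zi] eij_ne_zi by metis
    ultimately show ?thesis by (simp add: extv_def)
  qed
  have h: "extv n \<Gamma> W l = (\<lambda>_. 0)" if "n \<le> l" for l
    using linvf_facts(2)[OF W that] Qf_high[OF G W that] by (simp add: extv_def fun_eq_iff)
  show ?thesis using p z h by (simp add: kalg_def zi_def numeral_2_eq_2)
qed

lemma ext_stab: assumes G: "\<Gamma> \<in> Fjets n 0" and W: "W \<in> linvf n"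
  shows "extv n \<Gamma> W \<in> stab n 0 \<Gamma>"
proof -
  let ?V = "extv n \<Gamma> W"
  have Vk: "?V \<in> kalg n 0" by (rule ext_kalg[OF G W])
  note kf = kalg_facts[OF Vk]
  have sG: "suppMI n (\<Gamma> l i j)" for l i j using G by (auto simp: Fjets_def intro: polys_suppMI)
  have L: "lie n ?V \<Gamma> l i j \<alpha> = 0" if "l < n" "i < n" "j < n" "mdeg n \<alpha> \<le> 0" for l i j \<alpha>
  proof (cases "\<alpha> \<in> MI n")
    case False
    show ?thesis by (rule lie_offMI) (use kf(1) sG that False in auto)
  next
    case True
    then have az: "\<alpha> = zi" using mdeg0 that(4) by simp
    have d: "pdiff i (pdiff j (?V l)) zi = D2f n \<Gamma> (\<lambda>p q. W p (ei q)) l i j"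
      unfolding pdiff2_zi using Qf_D2[OF G that(2,3), of W l] W_eij[OF W that(2,3)]
      by (simp add: extv_def)
    show ?thesis unfolding az lie_zi[where V = ?V, OF allI[OF kf(3)]] d
      by (simp add: ext_lin D2f_def gc_def)
  qed
  show ?thesis unfolding stab_def using Vk L by (auto simp: trunc_def fun_eq_iff)
qed

lemma hmap_ext: assumes W: "W \<in> linvf n"
  shows "(\<lambda>l. hcomp n 1 (extv n \<Gamma> W l)) = W"
proof (intro ext)
  fix l \<alpha>
  show "hcomp n 1 (extv n \<Gamma> W l) \<alpha> = W l \<alpha>"
  proof (cases "mdeg n \<alpha> = 1")
    case True
    have "Qf n \<Gamma> W l \<alpha> = 0"
    proof (rule ccontr)
      assume "Qf n \<Gamma> W l \<alpha> \<noteq> 0"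
      then obtain i j where "i < n" "j < n" "\<alpha> = eij i j" using Qf_supp by blast
      then show False using True mdeg_eij by simp
    qed
    then show ?thesis using True by (simp add: hcomp_def extv_def)
  next
    case False
    then show ?thesis using linvf_facts(1)[OF W, of l \<alpha>] by (auto simp: hcomp_def)
  qed
qed

lemma hmap_stab: assumes "V \<in> stab n k \<Gamma>" shows "(\<lambda>l. hcomp n 1 (V l)) \<in> linvf n"
proof -
  have Vk: "V \<in> kalg n k" using assms by (simp add: stab_def)
  note kf = kalg_facts[OF Vk]
  show ?thesis unfolding linvf_def
    using kf(2) kf(4) by (auto simp: hcomp_def split: if_splits)
qed

lemma pmult_lin1: "pmult (\<lambda>\<alpha>. c * p \<alpha> + d * q \<alpha>) r \<beta> = c * pmult p r \<beta> + d * pmult q r \<beta>"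
  unfolding pmult_def by (simp add: sum.distrib sum_distrib_left algebra_simps)
lemma pmult_lin2: "pmult r (\<lambda>\<alpha>. c * p \<alpha> + d * q \<alpha>) \<beta> = c * pmult r p \<beta> + d * pmult r q \<beta>"
  unfolding pmult_def by (simp add: sum.distrib sum_distrib_left algebra_simps)
lemma pdiff_lin: "pdiff m (\<lambda>\<alpha>. c * p \<alpha> + d * q \<alpha>) = (\<lambda>\<alpha>. c * pdiff m p \<alpha> + d * pdiff m q \<alpha>)"
  unfolding pdiff_def by (simp add: fun_eq_iff algebra_simps)

lemma lie_lin: "lie n (\<lambda>l \<alpha>. c * V l \<alpha> + d * W l \<alpha>) \<Gamma> l i j \<alpha> = c * lie n V \<Gamma> l i j \<alpha> + d * lie n W \<Gamma> l i j \<alpha>"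
  unfolding lie_def pdiff_lin pmult_lin1 pmult_lin2
  by (simp add: sum.distrib sum_distrib_left algebra_simps)

lemma kalg_lin: assumes "V \<in> kalg n k" "W \<in> kalg n k"
  shows "(\<lambda>l \<alpha>. c * V l \<alpha> + d * W l \<alpha>) \<in> kalg n k"
  using assms unfolding kalg_def polys_def by (auto simp: fun_eq_iff) (metis add.right_neutral mult_zero_right)

lemma stab_lin: assumes "V \<in> stab n k \<Gamma>" "W \<in> stab n k \<Gamma>"
  shows "(\<lambda>l \<alpha>. c * V l \<alpha> + d * W l \<alpha>) \<in> stab n k \<Gamma>"
proof -
  have k: "(\<lambda>l \<alpha>. c * V l \<alpha> + d * W l \<alpha>) \<in> kalg n k" using assms kalg_lin by (auto simp: stab_def)
  have "trunc n k (lie n (\<lambda>l \<alpha>. c * V l \<alpha> + d * W l \<alpha>) \<Gamma> l i j) = (\<lambda>_. 0)" if "l < n" "i < n" "j < n" for l i j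
    unfolding trunc_def using stab_lie0[OF assms(1) that] stab_lie0[OF assms(2) that]
    by (simp add: lie_lin fun_eq_iff)
  then show ?thesis using k by (simp add: stab_def)
qed

lemma lin_det: assumes V: "V \<in> stab n 0 \<Gamma>" and W: "W \<in> stab n 0 \<Gamma>"
  and eq: "\<forall>p<n. \<forall>q<n. V p (ei q) = W p (ei q)"
  shows "V = W"
proof -
  let ?D = "\<lambda>l \<alpha>. 1 * V l \<alpha> + (-1) * W l \<alpha>"
  have D: "?D \<in> stab n 0 \<Gamma>" by (rule stab_lin[OF V W])
  have Dk: "?D \<in> kalg n 0" using D by (simp add: stab_def)
  have lin: "\<forall>p<n. \<forall>q<n. ?D p (ei q) = 0" using eq by simp
  have "?D = (\<lambda>_ _. 0)"
    by (rule vanish[OF Dk _ low_from_lin[OF Dk lin]]) (use stab_lie0[OF D] in blast)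
  then show ?thesis by (auto simp: fun_eq_iff dest: fun_cong)
qed

lemma vs_vscale: "vector_space vscale"
  by unfold_locales (simp_all add: vscale_def fun_eq_iff algebra_simps)

definition Eu :: "nat \<Rightarrow> nat \<Rightarrow> nat \<Rightarrow> rpoly" where
  "Eu p q = (\<lambda>l \<alpha>. if l = p \<and> \<alpha> = ei q then 1 else 0)"

lemma Eu_linvf: "p < n \<Longrightarrow> q < n \<Longrightarrow> Eu p q \<in> linvf n"
  unfolding linvf_def Eu_def by (auto intro!: ext)

lemma Eu_at: "Eu p' q' p (ei q) = (if (p', q') = (p, q) then 1 else 0)"
  by (auto simp: Eu_def)

lemma sum_vscale_apply: "finite A \<Longrightarrow> (\<Sum>x\<in>A. vscale (f x) (F x)) l \<alpha> = (\<Sum>x\<in>A. f x * F x l \<alpha>)"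
  by (induction A rule: finite_induct) (simp_all add: vscale_def)

lemma pair_delta: fixes g :: "nat \<times> nat \<Rightarrow> real" assumes "p < n" "q < n"
  shows "(\<Sum>x\<in>{..<n} \<times> {..<n}. g x * (if x = (p, q) then 1 else 0)) = g (p, q)"
proof -
  have "(\<Sum>x\<in>{..<n} \<times> {..<n}. g x * (if x = (p, q) then 1 else 0)) = (\<Sum>x\<in>{..<n} \<times> {..<n}. if x = (p, q) then g (p, q) else 0)"
    by (rule sum.cong) auto
  also have "\<dots> = g (p, q)" using assms by simp
  finally show ?thesis .
qed

theorem part1: assumes G: "\<Gamma> \<in> Fjets n 0"
  shows "bij_betw (\<lambda>V l. hcomp n 1 (V l)) (stab n 0 \<Gamma>) (linvf n)
          \<and> vector_space.dim vscale (stab n 0 \<Gamma>) = n ^ 2"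
proof
  let ?S = "stab n 0 \<Gamma>"
  let ?h = "\<lambda>V l. hcomp n 1 (V l)"
  have hlin: "?h V p (ei q) = V p (ei q)" if "q < n" for V p q
    using that by (simp add: hcomp_def)
  have inj: "inj_on ?h ?S"
  proof (rule inj_onI)
    fix V W assume V: "V \<in> ?S" and W: "W \<in> ?S" and e: "?h V = ?h W"
    have "\<forall>p<n. \<forall>q<n. V p (ei q) = W p (ei q)"
      using e hlin by (metis)
    then show "V = W" by (rule lin_det[OF V W])
  qed
  have img: "?h ` ?S = linvf n"
  proof
    show "?h ` ?S \<subseteq> linvf n" using hmap_stab by blast
  next
    show "linvf n \<subseteq> ?h ` ?S"
    proof
      fix W assume W: "W \<in> linvf n"
      have "W = ?h (extv n \<Gamma> W)" using hmap_ext[OF W] by simp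
      moreover have "extv n \<Gamma> W \<in> ?S" by (rule ext_stab[OF G W])
      ultimately show "W \<in> ?h ` ?S" by blast
    qed
  qed
  show "bij_betw ?h ?S (linvf n)" using inj img by (simp add: bij_betw_def)
next
  let ?S = "stab n 0 \<Gamma>"
  interpret vs: vector_space vscale by (rule vs_vscale)
  have sub: "vs.subspace ?S"
    unfolding vs.subspace_def
  proof (intro conjI ballI allI)
    have "(0 :: nat \<Rightarrow> rpoly) = (\<lambda>_ _. 0)" by (simp add: fun_eq_iff)
    then show "0 \<in> ?S" using zero_stab by simp
  next
    fix x y assume "x \<in> ?S" "y \<in> ?S"
    moreover have "x + y = (\<lambda>l \<alpha>. 1 * x l \<alpha> + 1 * y l \<alpha>)" by (simp add: fun_eq_iff)
    ultimately show "x + y \<in> ?S" using stab_lin[of x n 0 \<Gamma> y 1 1] by simp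
  next
    fix c x assume "x \<in> ?S"
    moreover have "vscale c x = (\<lambda>l \<alpha>. c * x l \<alpha> + 0 * x l \<alpha>)" by (simp add: fun_eq_iff vscale_def)
    ultimately show "vscale c x \<in> ?S" using stab_lin[of x n 0 \<Gamma> x c 0] by simp
  qed
  define I where "I = {..<n} \<times> {..<n}"
  define E' where "E' = (\<lambda>x. extv n \<Gamma> (Eu (fst x) (snd x)))"
  define B where "B = E' ` I"
  have fI: "finite I" by (simp add: I_def)
  have E'_at: "E' x p (ei q) = (if x = (p, q) then 1 else 0)" for x p q
    by (cases x) (simp add: E'_def ext_lin Eu_at)
  have inj: "inj_on E' I"
  proof (rule inj_onI)
    fix x y assume "x \<in> I" "y \<in> I" "E' x = E' y"
    then have "E' x (fst x) (ei (snd x)) = E' y (fst x) (ei (snd x))" by simp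
    then show "x = y" by (simp add: E'_at split: if_splits)
  qed
  have BS: "B \<subseteq> ?S"
    unfolding B_def E'_def I_def using ext_stab[OF G] Eu_linvf by auto
  have cardB: "card B = n ^ 2"
    unfolding B_def card_image[OF inj] by (simp add: I_def power2_eq_square)
  have indep: "vs.independent B"
  proof (rule vs.independent_if_scalars_zero)
    show "finite B" using fI by (simp add: B_def)
  next
    fix c v assume z: "(\<Sum>v\<in>B. vscale (c v) v) = 0" and v: "v \<in> B"
    then obtain x where x: "x \<in> I" "v = E' x" by (auto simp: B_def)
    obtain p q where pq: "x = (p, q)" "p < n" "q < n" using x(1) by (auto simp: I_def)
    have "(\<Sum>v\<in>B. vscale (c v) v) = (\<Sum>y\<in>I. vscale (c (E' y)) (E' y))"
      unfolding B_def by (rule sum.reindex[OF inj, unfolded comp_def])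
    then have "(\<Sum>y\<in>I. vscale (c (E' y)) (E' y)) p (ei q) = 0" using z by simp
    then have "(\<Sum>y\<in>I. c (E' y) * (if y = (p, q) then 1 else 0)) = 0"
      unfolding sum_vscale_apply[OF fI] E'_at .
    then have "c (E' (p, q)) = 0" unfolding I_def using pair_delta[OF pq(2,3), of "\<lambda>y. c (E' y)"] by simp
    then show "c v = 0" using x pq by simp
  qed
  have span: "?S \<subseteq> vs.span B"
  proof
    fix V assume V: "V \<in> ?S"
    define T where "T = (\<Sum>y\<in>I. vscale (V (fst y) (ei (snd y))) (E' y))"
    have Tspan: "T \<in> vs.span B"
      unfolding T_def by (intro vs.span_sum vs.span_scale vs.span_base) (auto simp: B_def)
    have "vs.span B \<subseteq> ?S" by (rule vs.span_minimal[OF BS sub])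
    then have TS: "T \<in> ?S" using Tspan by blast
    have "\<forall>p<n. \<forall>q<n. V p (ei q) = T p (ei q)"
    proof (intro allI impI)
      fix p q assume pq: "p < n" "q < n"
      have "T p (ei q) = (\<Sum>y\<in>I. V (fst y) (ei (snd y)) * (if y = (p, q) then 1 else 0))"
        unfolding T_def sum_vscale_apply[OF fI] E'_at ..
      also have "\<dots> = V p (ei q)" unfolding I_def using pair_delta[OF pq, of "\<lambda>y. V (fst y) (ei (snd y))"] by simp
      finally show "V p (ei q) = T p (ei q)" by simp
    qed
    then have "V = T" by (rule lin_det[OF V TS])
    then show "V \<in> vs.span B" using Tspan by simp
  qed
  show "vs.dim ?S = n ^ 2"
    by (rule vs.dim_unique[OF BS span indep cardB])
qed

theorem mainTheorem4:
  fixes n :: nat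
  assumes "n \<ge> 3"
  shows "(\<forall>\<Gamma>\<in>Fjets n 0.
            bij_betw (\<lambda>V l. hcomp n 1 (V l)) (stab n 0 \<Gamma>) (linvf n)
          \<and> vector_space.dim vscale (stab n 0 \<Gamma>) = n ^ 2)
       \<and> (\<forall>k\<ge>1. \<exists>U. open_in_F n k U \<and> dense_in_F n k U
            \<and> (\<forall>\<Gamma>\<in>U. stab n k \<Gamma> = {(\<lambda>_ _. 0)}))"
  using part1 part2[OF assms] by blast

end
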